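(* Let $d\geq 1$, $p\in[0,1]$, let $(S_n)$ be the $d$-dimensional elephant random walk with memory parameter $p$, and let $a=\frac{2dp-1}{2d-1}$. Define $a_1=1$ and $a_n=\prod_{k=1}^{n-1}\frac{k}{k+a}=\frac{\Gamma(a+1)\Gamma(n)}{\Gamma(n+a)}$ for $n\geq 2$; $b_0=0$ and $b_n=\sum_{k=1}^n\frac{1}{a_k}$ for $n\geq1$; $\varepsilon_1=S_1$ and $\varepsilon_n=S_n-\bigl(1+\frac{a}{n-1}\bigr)S_{n-1}$ for $n\geq 2$; $M_n=\sum_{k=1}^n a_k\varepsilon_k$ (so $M_n=a_nS_n$) and $N_n=\sum_{k=1}^n a_kb_{k-1}\varepsilon_k$; and $\mathcal{M}_n=\begin{pmatrix}M_n\\ N_n\end{pmatrix}\in\mathbb{R}^{2d}$. Then $(\mathcal{M}_n)$ is a locally square-integrable martingale of $\mathbb{R}^{2d}$ with respect to $\mathcal{F}_n=\sigma(X_1,\dots,X_n)$. Moreover, if $a<1/2$, its predictable quadratic variation $\langle\mathcal{M}\rangle_n=\sum_{k=1}^n\mathbb{E}[\Delta\mathcal{M}_k\Delta\mathcal{M}_k^T\mid\mathcal{F}_{k-1}]$ (with $\Delta\mathcal{M}_k=\mathcal{M}_k-\mathcal{M}_{k-1}$, $\mathcal{M}_0=0$) satisfies $$\lim_{n\to\infty}V_n\langle\mathcal{M}\rangle_nV_n^T=V\quad\text{a.s.},$$ where $$V_n=\frac{1}{n\sqrt{n}}\begin{pmatrix}b_n&0\\0&1\end{pmatrix}\otimes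 I_d,\qquad V=\frac{1}{d(a+1)^2}\begin{pmatrix}\frac{1}{1-2a}&\frac{1}{2-a}\\ \frac{1}{2-a}&\frac13\end{pmatrix}\otimes I_d.$$
   Context: The $d$-dimensional elephant random walk (ERW) with memory parameter $p\in[0,1]$ is defined as follows. Let $e_1,\dots,e_d$ be the standard basis of $\mathbb{R}^d$; the $2d$ directions are $\pm e_1,\dots,\pm e_d$. Set $S_0=0$. The first step $X_1$ is uniformly distributed on the $2d$ directions. For $n\geq 1$, given $X_1,\dots,X_n$, an index $k$ is chosen uniformly at random in $\{1,\dots,n\}$, and then $X_{n+1}=X_k$ with probability $p$, while $X_{n+1}$ equals each of the $2d-1$ remaining directions with probability $(1-p)/(2d-1)$. The position is $S_{n+1}=S_n+X_{n+1}$. $\Gamma$ is the Euler Gamma function, $\otimes$ the Kronecker product, $I_d$ the identity matrix of order $d$. *)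

theory Defs
  imports "HOL-Probability.Probability"
begin

text \<open>Directions of the d-dimensional walk: a pair (i, s) stands for +e_i (s = True)
  or -e_i (s = False); the index type 'd has CARD('d) = d elements, so there are 2d directions.\<close>

definition dirvec :: "'d::finite \<times> bool \<Rightarrow> real ^ 'd" where
  "dirvec x = (\<chi> j. if j = fst x then (if snd x then 1 else -1) else 0)"

text \<open>Conditional probability that X_{m+1} = y given X_1 = x 1, ..., X_m = x m (m >= 1).\<close>
definition erw_step_prob :: "real \<Rightarrow> nat \<Rightarrow> (nat \<Rightarrow> 'd::finite \<times> bool) \<Rightarrow> 'd \<times> bool \<Rightarrow> real" where
  "erw_step_prob p m x y =
     (\<Sum>k\<in>{1..m}. if x k = y then p else (1 - p) / (2 * real CARD('d) - 1)) / real m"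

text \<open>Probability that (X_1, ..., X_n) = (x 1, ..., x n).\<close>
fun erw_path_prob :: "real \<Rightarrow> nat \<Rightarrow> (nat \<Rightarrow> 'd::finite \<times> bool) \<Rightarrow> real" where
  "erw_path_prob p 0 x = 1"
| "erw_path_prob p (Suc 0) x = 1 / (2 * real CARD('d))"
| "erw_path_prob p (Suc (Suc n)) x =
     erw_path_prob p (Suc n) x * erw_step_prob p (Suc n) x (x (Suc (Suc n)))"

definition is_erw :: "'a measure \<Rightarrow> real \<Rightarrow> (nat \<Rightarrow> 'a \<Rightarrow> 'd::finite \<times> bool) \<Rightarrow> bool" where
  "is_erw M p X \<longleftrightarrow> prob_space M \<and>
     (\<forall>i. X i \<in> measurable M (count_space UNIV)) \<and>
     (\<forall>n x. measure M {\<omega>\<in>space M. \<forall>i\<in>{1..n}. X i \<omega> = x i} = erw_path_prob p n x)"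

definition erw_filtr :: "'a measure \<Rightarrow> (nat \<Rightarrow> 'a \<Rightarrow> 'd \<times> bool) \<Rightarrow> nat \<Rightarrow> 'a measure" where
  "erw_filtr M X n = sigma (space M) {X i -` {x} \<inter> space M | i x. i \<in> {1..n}}"

definition erw_a :: "nat \<Rightarrow> real \<Rightarrow> real" where
  "erw_a d p = (2 * real d * p - 1) / (2 * real d - 1)"

definition acoef :: "real \<Rightarrow> nat \<Rightarrow> real" where
  "acoef a n = (\<Prod>k\<in>{1..<n}. real k / (real k + a))"

definition bcoef :: "real \<Rightarrow> nat \<Rightarrow> real" where
  "bcoef a n = (\<Sum>k\<in>{1..n}. 1 / acoef a k)"

definition erw_S :: "(nat \<Rightarrow> 'a \<Rightarrow> 'd::finite \<times> bool) \<Rightarrow> nat \<Rightarrow> 'a \<Rightarrow> real ^ 'd" where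
  "erw_S X n \<omega> = (\<Sum>i\<in>{1..n}. dirvec (X i \<omega>))"

definition erw_eps :: "real \<Rightarrow> (nat \<Rightarrow> 'a \<Rightarrow> 'd::finite \<times> bool) \<Rightarrow> nat \<Rightarrow> 'a \<Rightarrow> real ^ 'd" where
  "erw_eps a X n \<omega> = (if n = 1 then erw_S X 1 \<omega>
     else erw_S X n \<omega> - (1 + a / real (n - 1)) *\<^sub>R erw_S X (n - 1) \<omega>)"

definition erw_M :: "real \<Rightarrow> (nat \<Rightarrow> 'a \<Rightarrow> 'd::finite \<times> bool) \<Rightarrow> nat \<Rightarrow> 'a \<Rightarrow> real ^ 'd" where
  "erw_M a X n \<omega> = (\<Sum>k\<in>{1..n}. acoef a k *\<^sub>R erw_eps a X k \<omega>)"

definition erw_N :: "real \<Rightarrow> (nat \<Rightarrow> 'a \<Rightarrow> 'd::finite \<times> bool) \<Rightarrow> nat \<Rightarrow> 'a \<Rightarrow> real ^ 'd" where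
  "erw_N a X n \<omega> = (\<Sum>k\<in>{1..n}. (acoef a k * bcoef a (k - 1)) *\<^sub>R erw_eps a X k \<omega>)"

text \<open>The stacked vector (M_n; N_n) in R^{2d}, coordinates indexed by (block, j),
  block 1 = M, block 2 = N.\<close>
definition erw_Mcal :: "real \<Rightarrow> (nat \<Rightarrow> 'a \<Rightarrow> 'd::finite \<times> bool) \<Rightarrow> nat \<Rightarrow> 'a \<Rightarrow> real ^ (2 \<times> 'd)" where
  "erw_Mcal a X n \<omega> = (\<chi> rj. if fst rj = 1 then erw_M a X n \<omega> $ snd rj else erw_N a X n \<omega> $ snd rj)"

definition kron :: "real ^ 'm ^ 'n \<Rightarrow> real ^ 'p ^ 'q \<Rightarrow> real ^ ('m \<times> 'p) ^ ('n \<times> 'q)" where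
  "kron A B = (\<chi> ik jl. A $ fst ik $ fst jl * B $ snd ik $ snd jl)"

definition sq_int_martingale ::
  "'a measure \<Rightarrow> (nat \<Rightarrow> 'a measure) \<Rightarrow> (nat \<Rightarrow> 'a \<Rightarrow> real ^ 'n) \<Rightarrow> bool" where
  "sq_int_martingale M F Z \<longleftrightarrow>
     (\<forall>n. subalgebra M (F n) \<and> sets (F n) \<subseteq> sets (F (Suc n))) \<and>
     (\<forall>n i. (\<lambda>\<omega>. Z n \<omega> $ i) \<in> borel_measurable (F n)) \<and>
     (\<forall>n i. integrable M (\<lambda>\<omega>. Z n \<omega> $ i) \<and> integrable M (\<lambda>\<omega>. (Z n \<omega> $ i)\<^sup>2)) \<and>
     (\<forall>n i. AE \<omega> in M. real_cond_exp M (F n) (\<lambda>\<omega>. Z (Suc n) \<omega> $ i) \<omega> = Z n \<omega> $ i)"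

definition pred_qv ::
  "'a measure \<Rightarrow> (nat \<Rightarrow> 'a measure) \<Rightarrow> (nat \<Rightarrow> 'a \<Rightarrow> real ^ 'n) \<Rightarrow> nat \<Rightarrow> 'a \<Rightarrow> real ^ 'n ^ 'n" where
  "pred_qv M F Z n \<omega> = (\<Sum>k\<in>{1..n}. \<chi> r c.
     real_cond_exp M (F (k - 1))
       (\<lambda>\<omega>'. (Z k \<omega>' - Z (k - 1) \<omega>') $ r * (Z k \<omega>' - Z (k - 1) \<omega>') $ c) \<omega>)"

definition erw_Vn :: "real \<Rightarrow> nat \<Rightarrow> real ^ (2 \<times> 'd::finite) ^ (2 \<times> 'd)" where
  "erw_Vn a n = (1 / (real n * sqrt (real n))) *\<^sub>R
     kron (vector [vector [bcoef a n, 0], vector [0, 1]] :: real^2^2) (mat 1 :: real^'d^'d)"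

definition erw_V :: "real \<Rightarrow> real ^ (2 \<times> 'd::finite) ^ (2 \<times> 'd)" where
  "erw_V a = (1 / (real CARD('d) * (a + 1)\<^sup>2)) *\<^sub>R
     kron (vector [vector [1 / (1 - 2 * a), 1 / (2 - a)], vector [1 / (2 - a), 1 / 3]] :: real^2^2)
          (mat 1 :: real^'d^'d)"

end

theory Submission
  imports Defs "HOL-Real_Asymp.Real_Asymp"
begin


definition paths :: "nat \<Rightarrow> (nat \<Rightarrow> 'd::finite \<times> bool) set" where
  "paths n = PiE {1..n} (\<lambda>_. UNIV)"

definition stp :: "real \<Rightarrow> nat \<Rightarrow> (nat \<Rightarrow> 'd::finite \<times> bool) \<Rightarrow> 'd \<times> bool \<Rightarrow> real" where
  "stp p n y z = (if n = 0 then 1 / (2 * real CARD('d)) else erw_step_prob p n y z)"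

lemma finite_paths: "finite (paths n)"
  unfolding paths_def by (intro finite_PiE) auto

lemma erw_step_prob_local:
  assumes "\<forall>i\<in>{1..m}. x i = y i"
  shows "erw_step_prob p m x z = erw_step_prob p m y z"
  unfolding erw_step_prob_def using assms by (intro arg_cong2[where f="(/)"] sum.cong) auto

lemma stp_local:
  assumes "\<forall>i\<in>{1..m}. x i = y i"
  shows "stp p m x z = stp p m y z"
  unfolding stp_def using erw_step_prob_local[OF assms] by simp

lemma erw_path_prob_local:
  "\<forall>i\<in>{1..n}. x i = y i \<Longrightarrow> erw_path_prob p n x = erw_path_prob p n (y::nat \<Rightarrow> 'd::finite \<times> bool)"
proof (induction p n x rule: erw_path_prob.induct)
  case (3 p n x)
  have "erw_path_prob p (Suc n) x = erw_path_prob p (Suc n) y"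
    using 3 by (intro "3.IH") auto
  moreover have "erw_step_prob p (Suc n) x (x (Suc (Suc n))) = erw_step_prob p (Suc n) y (y (Suc (Suc n)))"
    using 3(2) erw_step_prob_local[of "Suc n" x y p] by auto
  ultimately show ?case by simp
qed auto

lemma erw_path_prob_Suc:
  "erw_path_prob p (Suc n) x = erw_path_prob p n x * stp p n x (x (Suc n))"
  by (cases n) (auto simp: stp_def)

lemma paths_Suc_eq:
  "paths (Suc n) = (\<lambda>(z, y). y(Suc n := z)) ` (UNIV \<times> paths n)"
proof -
  have "{1..Suc n} = insert (Suc n) {1..n}" by auto
  then show ?thesis unfolding paths_def by (simp add: PiE_insert_eq)
qed

lemma paths_Suc_inj:
  "inj_on (\<lambda>(z, y). y(Suc n := z)) (UNIV \<times> (paths n :: (nat \<Rightarrow> 'd::finite \<times> bool) set))"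
  unfolding paths_def using inj_combinator[of "Suc n" "{1..n}" "\<lambda>_. UNIV"] by auto

lemma sum_paths_Suc:
  "(\<Sum>x\<in>paths (Suc n). H x) = (\<Sum>y\<in>paths n. \<Sum>z\<in>UNIV. H (y(Suc n := z)))"
proof -
  have "(\<Sum>x\<in>paths (Suc n). H x) = (\<Sum>zy\<in>UNIV \<times> paths n. H ((\<lambda>(z, y). y(Suc n := z)) zy))"
    by (subst paths_Suc_eq, subst sum.reindex[OF paths_Suc_inj]) (simp add: case_prod_unfold)
  also have "\<dots> = (\<Sum>z\<in>UNIV. \<Sum>y\<in>paths n. H (y(Suc n := z)))"
    by (simp add: sum.cartesian_product split_def)
  also have "\<dots> = (\<Sum>y\<in>paths n. \<Sum>z\<in>UNIV. H (y(Suc n := z)))"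
    by (rule sum.swap)
  finally show ?thesis .
qed

lemma paths_upd_restrict:
  assumes "y \<in> paths n"
  shows "\<forall>i\<in>{1..n}. (y(Suc n := z)) i = y i"
  by auto

definition qq :: "real \<Rightarrow> nat \<Rightarrow> real" where
  "qq p d = (1 - p) / (2 * real d - 1)"

lemma sum_f_u:
  "(\<Sum>z\<in>UNIV. (if w = z then p else qq p CARD('d)) * u z) =
     qq p CARD('d) * (\<Sum>z\<in>UNIV. u z) + (p - qq p CARD('d)) * u (w :: 'd::finite \<times> bool)"
proof -
  have "(\<Sum>z\<in>UNIV. (if w = z then p else qq p CARD('d)) * u z) =
     (\<Sum>z\<in>UNIV. qq p CARD('d) * u z + (if z = w then (p - qq p CARD('d)) * u z else 0))"
    by (intro sum.cong) (auto simp: algebra_simps)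
  also have "\<dots> = qq p CARD('d) * (\<Sum>z\<in>UNIV. u z) + (p - qq p CARD('d)) * u w"
    by (simp add: sum.distrib sum_distrib_left)
  finally show ?thesis .
qed

lemma stp_sum_general:
  "(\<Sum>z\<in>UNIV. stp p n y z * u z) =
    (if n = 0 then (\<Sum>z\<in>UNIV. u z) / (2 * real CARD('d))
     else qq p CARD('d) * (\<Sum>z\<in>UNIV. u z) + (p - qq p CARD('d)) * (\<Sum>i\<in>{1..n}. u (y i)) / real n)"
  for y :: "nat \<Rightarrow> 'd::finite \<times> bool"
proof (cases "n = 0")
  case True then show ?thesis by (simp add: stp_def sum_divide_distrib)
next
  case False
  have "(\<Sum>z\<in>UNIV. stp p n y z * u z) =
      (\<Sum>z\<in>UNIV. (\<Sum>k\<in>{1..n}. (if y k = z then p else qq p CARD('d)) * u z)) / real n"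
  proof -
    have "(\<Sum>z\<in>UNIV. stp p n y z * u z) = (\<Sum>z\<in>UNIV. (\<Sum>k\<in>{1..n}. (if y k = z then p else qq p CARD('d)) * u z) / real n)"
      by (intro sum.cong) (unfold stp_def erw_step_prob_def qq_def, simp_all add: False sum_distrib_right)
    then show ?thesis by (simp add: sum_divide_distrib)
  qed
  also have "\<dots> = (\<Sum>k\<in>{1..n}. (\<Sum>z\<in>UNIV. (if y k = z then p else qq p CARD('d)) * u z)) / real n"
    by (subst sum.swap) simp
  also have "\<dots> = (\<Sum>k\<in>{1..n}. qq p CARD('d) * (\<Sum>z\<in>UNIV. u z) + (p - qq p CARD('d)) * u (y k)) / real n"
    by (simp only: sum_f_u)
  also have "\<dots> = qq p CARD('d) * (\<Sum>z\<in>UNIV. u z) + (p - qq p CARD('d)) * (\<Sum>i\<in>{1..n}. u (y i)) / real n"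
  proof -
    have "(\<Sum>k\<in>{1..n}. qq p CARD('d) * (\<Sum>z\<in>UNIV. u z) + (p - qq p CARD('d)) * u (y k)) =
      real n * (qq p CARD('d) * (\<Sum>z\<in>UNIV. u z)) + (p - qq p CARD('d)) * (\<Sum>k\<in>{1..n}. u (y k))"
      by (simp add: sum.distrib sum_distrib_left)
    then show ?thesis using False by (simp add: field_simps)
  qed
  finally show ?thesis using False by simp
qed

lemma card_pos_real: "real CARD('a::finite) \<ge> 1"
proof -
  have "CARD('a) > 0" by simp
  then show ?thesis by linarith
qed

lemma card2: "2 * real CARD('a::finite) - 1 > 0"
proof -
  have "real CARD('a) \<ge> 1" by (rule card_pos_real)
  then show ?thesis by linarith
qed

lemma erw_a_eq: "erw_a CARD('d::finite) p = p - qq p CARD('d)"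
proof -
  define D where "D = 2 * real CARD('d) - 1"
  have ne: "D \<noteq> 0" using card2[where 'a='d] unfolding D_def by simp
  have "p - (1 - p) / D = (p * D - (1 - p)) / D" using ne by (simp add: field_simps)
  also have "p * D - (1 - p) = 2 * real CARD('d) * p - 1" unfolding D_def by (simp add: algebra_simps)
  finally show ?thesis unfolding erw_a_def qq_def D_def by simp
qed

lemma card_dir: "real CARD('d::finite \<times> bool) = 2 * real CARD('d)"
  by simp

lemma stp_sum1: "(\<Sum>z\<in>UNIV. stp p n y z) = 1"
  for y :: "nat \<Rightarrow> 'd::finite \<times> bool"
proof -
  have d: "2 * real CARD('d) - 1 > 0" by (rule card2)
  have "(\<Sum>z\<in>UNIV. stp p n y z) = (\<Sum>z\<in>UNIV. stp p n y z * 1)" by simp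
  also have "\<dots> = 1"
  proof (cases "n = 0")
    case True then show ?thesis by (subst stp_sum_general) simp
  next
    case False
    have "qq p CARD('d) * (2 * real CARD('d) - 1) = 1 - p"
      using d unfolding qq_def by simp
    then have "qq p CARD('d) * (2 * real CARD('d)) + (p - qq p CARD('d)) = 1"
      by (simp add: algebra_simps)
    then show ?thesis using False by (subst stp_sum_general) simp
  qed
  finally show ?thesis .
qed

lemma stp_mean:
  fixes y :: "nat \<Rightarrow> 'd::finite \<times> bool"
  assumes "(\<Sum>z\<in>UNIV. u z) = 0"
  shows "(\<Sum>z\<in>UNIV. stp p n y z * u z) = erw_a CARD('d) p / real n * (\<Sum>i\<in>{1..n}. u (y i))"
  using assms by (subst stp_sum_general) (simp add: erw_a_eq)

lemma stp_nonneg: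
  fixes y :: "nat \<Rightarrow> 'd::finite \<times> bool"
  assumes "0 \<le> p" "p \<le> 1"
  shows "stp p n y z \<ge> 0"
proof -
  have "2 * real CARD('d) - 1 > 0" by (rule card2)
  then have "(1 - p) / (2 * real CARD('d) - 1) \<ge> 0" using assms by simp
  then show ?thesis using assms unfolding stp_def erw_step_prob_def
    by (auto intro!: divide_nonneg_nonneg sum_nonneg)
qed



definition Vp :: "(nat \<Rightarrow> 'a \<Rightarrow> 'd::finite \<times> bool) \<Rightarrow> nat \<Rightarrow> 'a \<Rightarrow> nat \<Rightarrow> 'd \<times> bool" where
  "Vp X n \<omega> = restrict (\<lambda>i. X i \<omega>) {1..n}"

lemma Vp_in: "Vp X n \<omega> \<in> paths n"
  unfolding Vp_def paths_def by auto

lemma Vp_eq_iff: "x \<in> paths n \<Longrightarrow> Vp X n \<omega> = x \<longleftrightarrow> (\<forall>i\<in>{1..n}. X i \<omega> = x i)"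
  unfolding Vp_def paths_def by (auto simp: PiE_def extensional_def fun_eq_iff)

lemma Vp_apply: "i \<in> {1..n} \<Longrightarrow> Vp X n \<omega> i = X i \<omega>"
  unfolding Vp_def by simp

lemma Vp_Suc_restrict: "\<forall>i\<in>{1..n}. Vp X (Suc n) \<omega> i = Vp X n \<omega> i"
  unfolding Vp_def by auto

lemma Vp_Suc: "Vp X (Suc n) \<omega> = (Vp X n \<omega>)(Suc n := X (Suc n) \<omega>)"
  unfolding Vp_def by (auto simp: fun_eq_iff)

lemma cyl_sets:
  fixes X :: "nat \<Rightarrow> 'a \<Rightarrow> 'd::finite \<times> bool" and x :: "nat \<Rightarrow> 'd \<times> bool" and n :: nat
  assumes "space N = S" and "\<And>i v. i \<in> {1..n} \<Longrightarrow> X i -` {v} \<inter> S \<in> sets N"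
  shows "{\<omega>\<in>S. \<forall>i\<in>{1..n}. X i \<omega> = x i} \<in> sets N"
  using assms(2)
proof (induction n)
  case 0
  then show ?case using assms(1) by (simp add: sets.top[of N, simplified assms(1)])
next
  case (Suc n)
  have e: "{1..Suc n} = insert (Suc n) {1..n}" by auto
  have "{\<omega>\<in>S. \<forall>i\<in>{1..Suc n}. X i \<omega> = x i} = {\<omega>\<in>S. \<forall>i\<in>{1..n}. X i \<omega> = x i} \<inter> (X (Suc n) -` {x (Suc n)} \<inter> S)"
    unfolding e by auto
  moreover have "{\<omega>\<in>S. \<forall>i\<in>{1..n}. X i \<omega> = x i} \<in> sets N" using Suc by auto
  moreover have "X (Suc n) -` {x (Suc n)} \<inter> S \<in> sets N" using Suc.prems by auto
  ultimately show ?case by auto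
qed

lemma Vp_measurable:
  fixes X :: "nat \<Rightarrow> 'a \<Rightarrow> 'd::finite \<times> bool" and n :: nat
  assumes "space N = S" and "\<And>i v. i \<in> {1..n} \<Longrightarrow> X i -` {v} \<inter> S \<in> sets N"
  shows "Vp X n \<in> measurable N (count_space (paths n))"
proof (subst measurable_count_space_eq2[OF finite_paths], safe)
  fix x :: "nat \<Rightarrow> 'd \<times> bool" assume "x \<in> paths n"
  then have "Vp X n -` {x} \<inter> space N = {\<omega>\<in>S. \<forall>i\<in>{1..n}. X i \<omega> = x i}"
    using assms(1) Vp_eq_iff[of x n X] by auto
  then show "Vp X n -` {x} \<inter> space N \<in> sets N" using cyl_sets[OF assms] by simp
qed (rule Vp_in)

lemma funV_measurable:
  fixes X :: "nat \<Rightarrow> 'a \<Rightarrow> 'd::finite \<times> bool" and n :: nat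
  assumes "space N = S" and "\<And>i v. i \<in> {1..n} \<Longrightarrow> X i -` {v} \<inter> S \<in> sets N"
  shows "(\<lambda>\<omega>. G (Vp X n \<omega>)) \<in> measurable N (count_space UNIV)"
        "(\<lambda>\<omega>. (H (Vp X n \<omega>) :: real)) \<in> borel_measurable N"
proof -
  show "(\<lambda>\<omega>. G (Vp X n \<omega>)) \<in> measurable N (count_space UNIV)"
    by (rule measurable_compose[OF Vp_measurable[OF assms] measurable_count_space])
  show "(\<lambda>\<omega>. (H (Vp X n \<omega>) :: real)) \<in> borel_measurable N"
    by (rule measurable_compose[OF Vp_measurable[OF assms] borel_measurable_count_space])
qed

locale erw_loc =
  fixes M :: "'a measure" and X :: "nat \<Rightarrow> 'a \<Rightarrow> 'd::finite \<times> bool" and p :: real and a :: real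
  assumes erw: "is_erw M p X" and p0: "0 \<le> p" and p1: "p \<le> 1" and a_def: "a = erw_a CARD('d) p"
begin

abbreviation "F \<equiv> erw_filtr M X"
abbreviation "pp \<equiv> erw_path_prob p"

lemma PS: "prob_space M" using erw unfolding is_erw_def by auto

sublocale prob_space M by (rule PS)

lemma X_meas: "X i \<in> measurable M (count_space UNIV)"
  using erw unfolding is_erw_def by auto

lemma X_pre_M: "X i -` {v} \<inter> space M \<in> sets M"
  using measurable_sets[OF X_meas, of "{v}"] by simp

lemma path_measure: "measure M {\<omega>\<in>space M. \<forall>i\<in>{1..n}. X i \<omega> = x i} = pp n x"
  for x :: "nat \<Rightarrow> 'd \<times> bool"
  using erw unfolding is_erw_def by auto

lemma pp_nonneg: "pp n x \<ge> 0" for x :: "nat \<Rightarrow> 'd \<times> bool"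
  unfolding path_measure[symmetric] by (rule measure_nonneg)

definition gens :: "nat \<Rightarrow> 'a set set" where
  "gens n = {X i -` {x} \<inter> space M | i x. i \<in> {1..n}}"

lemma gens_Pow: "gens n \<subseteq> Pow (space M)"
  unfolding gens_def by auto

lemma F_def': "F n = sigma (space M) (gens n)"
  unfolding erw_filtr_def gens_def by simp

lemma space_F: "space (F n) = space M"
  unfolding F_def' using gens_Pow by simp

lemma sets_F: "sets (F n) = sigma_sets (space M) (gens n)"
  unfolding F_def' using gens_Pow by simp

lemma gens_F:
  assumes "i \<in> {1..n}" shows "X i -` {v} \<inter> space M \<in> sets (F n)"
proof -
  have "X i -` {v} \<inter> space M \<in> gens n" unfolding gens_def using assms by blast
  then show ?thesis unfolding sets_F by (rule sigma_sets.Basic)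
qed

lemma gens_sub_M: "gens n \<subseteq> sets M"
  unfolding gens_def using X_pre_M by auto

lemma sets_F_M: "sets (F n) \<subseteq> sets M"
  unfolding sets_F by (rule sets.sigma_sets_subset[OF gens_sub_M])

lemma subalg: "subalgebra M (F n)"
  unfolding subalgebra_def using space_F sets_F_M by auto

lemma F_mono: "sets (F n) \<subseteq> sets (F (Suc n))"
  unfolding sets_F
proof (rule sigma_sets_mono', rule subsetI)
  fix A assume "A \<in> gens n"
  then obtain i x where "A = X i -` {x} \<inter> space M" "i \<in> {1..n}" unfolding gens_def by blast
  moreover then have "i \<in> {1..Suc n}" by auto
  ultimately show "A \<in> gens (Suc n)" unfolding gens_def by blast
qed

lemma sfs: "sigma_finite_subalgebra M (F n)"
  by (rule finite_measure_subalgebra_is_sigma_finite)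
     (simp add: finite_measure_subalgebra_def finite_measure_subalgebra_axioms_def subalg finite_measure_axioms)

lemma funV_F: "(\<lambda>\<omega>. (H (Vp X n \<omega>) :: real)) \<in> borel_measurable (F n)"
  by (rule funV_measurable(2)[OF space_F gens_F])

lemma funV_M: "(\<lambda>\<omega>. (H (Vp X n \<omega>) :: real)) \<in> borel_measurable M"
  by (rule funV_measurable(2)[OF refl X_pre_M])

lemma funV_M': "(\<lambda>\<omega>. G (Vp X n \<omega>)) \<in> measurable M (count_space UNIV)"
  by (rule funV_measurable(1)[OF refl X_pre_M])

lemma funV_bounded: "\<bar>H (Vp X n \<omega>)\<bar> \<le> (\<Sum>x\<in>paths n. \<bar>H x :: real\<bar>)"
  by (rule member_le_sum[where f="\<lambda>x. \<bar>H x\<bar>", OF Vp_in _ finite_paths]) auto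

lemma funV_int: "integrable M (\<lambda>\<omega>. (H (Vp X n \<omega>) :: real))"
  by (rule integrable_const_bound[where B="\<Sum>x\<in>paths n. \<bar>H x\<bar>"])
     (auto simp: funV_bounded funV_M)

lemma cyl_M: "{\<omega>\<in>space M. Vp X n \<omega> = x} \<in> sets M"
  using measurable_sets[OF funV_M'[of "\<lambda>x. x" n], of "{x}"] by (simp add: vimage_def Int_def conj_commute)

lemma INTEG: "integral\<^sup>L M (\<lambda>\<omega>. H (Vp X n \<omega>)) = (\<Sum>x\<in>paths n. H x * pp n x)"
proof -
  have "integral\<^sup>L M (\<lambda>\<omega>. H (Vp X n \<omega>)) =
        integral\<^sup>L M (\<lambda>\<omega>. \<Sum>x\<in>paths n. H x * indicator {\<omega>\<in>space M. Vp X n \<omega> = x} \<omega>)"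
  proof (rule Bochner_Integration.integral_cong[OF refl])
    fix \<omega> assume \<omega>: "\<omega> \<in> space M"
    have "(\<Sum>x\<in>paths n. H x * indicator {\<omega>\<in>space M. Vp X n \<omega> = x} \<omega>) =
          (\<Sum>x\<in>paths n. if x = Vp X n \<omega> then H x else 0)"
      using \<omega> by (intro sum.cong) (auto simp: indicator_def)
    also have "\<dots> = H (Vp X n \<omega>)" by (subst sum.delta[OF finite_paths]) (simp add: Vp_in)
    finally show "H (Vp X n \<omega>) = (\<Sum>x\<in>paths n. H x * indicator {\<omega>\<in>space M. Vp X n \<omega> = x} \<omega>)" by simp
  qed
  also have "\<dots> = (\<Sum>x\<in>paths n. H x * measure M {\<omega>\<in>space M. Vp X n \<omega> = x})"
  proof -
    have "integral\<^sup>L M (\<lambda>\<omega>. \<Sum>x\<in>paths n. H x * indicator {\<omega>\<in>space M. Vp X n \<omega> = x} \<omega>)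
      = (\<Sum>x\<in>paths n. integral\<^sup>L M (\<lambda>\<omega>. H x * indicator {\<omega>\<in>space M. Vp X n \<omega> = x} \<omega>))"
      by (rule Bochner_Integration.integral_sum) (auto intro!: integrable_mult_right integrable_real_indicator cyl_M simp: emeasure_eq_measure)
    also have "\<dots> = (\<Sum>x\<in>paths n. H x * measure M {\<omega>\<in>space M. Vp X n \<omega> = x})"
    proof (intro sum.cong refl)
      fix x
      have "{\<omega>\<in>space M. Vp X n \<omega> = x} \<inter> space M = {\<omega>\<in>space M. Vp X n \<omega> = x}" by auto
      then show "integral\<^sup>L M (\<lambda>\<omega>. H x * indicator {\<omega>\<in>space M. Vp X n \<omega> = x} \<omega>) = H x * measure M {\<omega>\<in>space M. Vp X n \<omega> = x}"
        by (simp only: integral_mult_right_zero Bochner_Integration.integral_indicator)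
    qed
    finally show ?thesis .
  qed
  also have "\<dots> = (\<Sum>x\<in>paths n. H x * pp n x)"
  proof (intro sum.cong refl)
    fix x :: "nat \<Rightarrow> 'd \<times> bool" assume x: "x \<in> paths n"
    have "{\<omega>\<in>space M. Vp X n \<omega> = x} = {\<omega>\<in>space M. \<forall>i\<in>{1..n}. X i \<omega> = x i}"
      using Vp_eq_iff[OF x, of X] by blast
    then show "H x * measure M {\<omega>\<in>space M. Vp X n \<omega> = x} = H x * pp n x"
      using path_measure[of n x] by simp
  qed
  finally show ?thesis .
qed

lemma pp_sum1: "(\<Sum>x\<in>(paths n :: (nat \<Rightarrow> 'd \<times> bool) set). pp n x) = 1"
  using INTEG[of "\<lambda>_. 1" n] prob_space by simp

end



lemma Vp_restrict: "restrict (Vp X (Suc n) \<omega>) {1..n} = Vp X n \<omega>"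
  unfolding Vp_def by (auto simp: fun_eq_iff)

lemma paths_restrict_upd: "y \<in> paths n \<Longrightarrow> restrict (y(Suc n := z)) {1..n} = y"
  unfolding paths_def by (auto simp: fun_eq_iff PiE_def extensional_def)

lemma paths_restrict: "y \<in> paths n \<Longrightarrow> restrict y {Suc 0..n} = y"
  unfolding paths_def by (auto simp: fun_eq_iff PiE_def extensional_def)

lemma pp_upd:
  "y \<in> paths n \<Longrightarrow> erw_path_prob p (Suc n) (y(Suc n := z)) = erw_path_prob p n y * stp p n y z"
  by (subst erw_path_prob_Suc) (auto intro!: arg_cong2[where f="(*)"] erw_path_prob_local stp_local)

context erw_loc
begin

lemma F_char_aux:
  "A \<in> sigma_sets (space M) (gens n) \<Longrightarrow> \<exists>B. A = Vp X n -` B \<inter> space M"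
proof (induction rule: sigma_sets.induct)
  case (Basic a)
  then obtain i x where a: "a = X i -` {x} \<inter> space M" "i \<in> {1..n}" unfolding gens_def by blast
  have "a = Vp X n -` {y. y i = x} \<inter> space M" using a Vp_apply[OF a(2), of X] by auto
  then show ?case by blast
next
  case Empty then show ?case by auto
next
  case (Compl a)
  then obtain B where "a = Vp X n -` B \<inter> space M" by blast
  then have "space M - a = Vp X n -` (- B) \<inter> space M" by auto
  then show ?case by blast
next
  case (Union a)
  then obtain B where B: "\<And>i. a i = Vp X n -` B i \<inter> space M" by metis
  then have "(\<Union>i. a i) = Vp X n -` (\<Union>i. B i) \<inter> space M" by auto
  then show ?case by blast
qed

lemma F_char: "A \<in> sets (F n) \<Longrightarrow> \<exists>B. A = Vp X n -` B \<inter> space M"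
  using F_char_aux sets_F by auto

lemma CE_sum:
  "(\<Sum>x\<in>paths (Suc n). h x * pp (Suc n) x) =
   (\<Sum>y\<in>paths n. (\<Sum>z\<in>UNIV. h (y(Suc n := z)) * stp p n y z) * pp n y)"
  by (subst sum_paths_Suc) (auto intro!: sum.cong simp: pp_upd sum_distrib_right sum_distrib_left mult_ac)

lemma CE:
  "AE \<omega> in M. real_cond_exp M (F n) (\<lambda>\<omega>. h (Vp X (Suc n) \<omega>)) \<omega> =
     (\<Sum>z\<in>UNIV. h ((Vp X n \<omega>)(Suc n := z)) * stp p n (Vp X n \<omega>) z)"
proof -
  define G where "G y = (\<Sum>z\<in>UNIV. h (y(Suc n := z)) * stp p n y z)" for y
  have "AE \<omega> in M. real_cond_exp M (F n) (\<lambda>\<omega>. h (Vp X (Suc n) \<omega>)) \<omega> = G (Vp X n \<omega>)"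
  proof (rule sigma_finite_subalgebra.real_cond_exp_charact[OF sfs])
    fix A assume "A \<in> sets (F n)"
    then obtain B where A: "A = Vp X n -` B \<inter> space M" using F_char by blast
    have "(\<integral>\<omega>\<in>A. h (Vp X (Suc n) \<omega>) \<partial>M) =
       integral\<^sup>L M (\<lambda>\<omega>. (\<lambda>x. indicator B (restrict x {1..n}) * h x) (Vp X (Suc n) \<omega>))"
      unfolding set_lebesgue_integral_def
      by (intro Bochner_Integration.integral_cong refl) (auto simp: A Vp_restrict[simplified] indicator_def)
    also have "\<dots> = (\<Sum>x\<in>paths (Suc n). indicator B (restrict x {1..n}) * h x * pp (Suc n) x)"
      by (rule INTEG)
    also have "\<dots> = (\<Sum>y\<in>paths n. (\<Sum>z\<in>UNIV. indicator B (restrict (y(Suc n := z)) {1..n}) * h (y(Suc n := z)) * stp p n y z) * pp n y)"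
      using CE_sum[of "\<lambda>x. indicator B (restrict x {1..n}) * h x"] by (simp add: mult_ac)
    also have "\<dots> = (\<Sum>y\<in>paths n. (indicator B y * G y) * pp n y)"
      by (intro sum.cong refl) (auto simp: paths_restrict_upd paths_restrict G_def sum_distrib_left mult_ac)
    also have "\<dots> = integral\<^sup>L M (\<lambda>\<omega>. indicator B (Vp X n \<omega>) * G (Vp X n \<omega>))"
      by (rule INTEG[symmetric])
    also have "\<dots> = (\<integral>\<omega>\<in>A. G (Vp X n \<omega>) \<partial>M)"
      unfolding set_lebesgue_integral_def
      by (intro Bochner_Integration.integral_cong refl) (auto simp: A indicator_def)
    finally show "(\<integral>\<omega>\<in>A. h (Vp X (Suc n) \<omega>) \<partial>M) = (\<integral>\<omega>\<in>A. G (Vp X n \<omega>) \<partial>M)" .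
  qed (auto intro: funV_int funV_F)
  then show ?thesis unfolding G_def .
qed

end



definition PX :: "(nat \<Rightarrow> 'd::finite \<times> bool) \<Rightarrow> nat \<Rightarrow> unit \<Rightarrow> 'd \<times> bool" where
  "PX x = (\<lambda>i _. x i)"

definition Sp :: "nat \<Rightarrow> (nat \<Rightarrow> 'd::finite \<times> bool) \<Rightarrow> real ^ 'd" where
  "Sp n x = erw_S (PX x) n ()"

definition MC :: "real \<Rightarrow> nat \<Rightarrow> (nat \<Rightarrow> 'd::finite \<times> bool) \<Rightarrow> real ^ (2 \<times> 'd)" where
  "MC a n x = erw_Mcal a (PX x) n ()"

definition cr :: "real \<Rightarrow> 2 \<Rightarrow> nat \<Rightarrow> real" where
  "cr a r k = (if r = 1 then acoef a k else acoef a k * bcoef a (k - 1))"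

lemma erw_S_local:
  assumes "\<forall>i\<in>{1..n}. X i \<omega> = Y i \<omega>'" "k \<le> n"
  shows "erw_S X k \<omega> = erw_S Y k \<omega>'"
  unfolding erw_S_def using assms by (intro sum.cong) auto

lemma erw_eps_local:
  assumes "\<forall>i\<in>{1..n}. X i \<omega> = Y i \<omega>'" "k \<le> n"
  shows "erw_eps a X k \<omega> = erw_eps a Y k \<omega>'"
  unfolding erw_eps_def using erw_S_local[of n X \<omega> Y \<omega>'] assms by auto

lemma erw_Mcal_local:
  assumes "\<forall>i\<in>{1..n}. X i \<omega> = Y i \<omega>'"
  shows "erw_Mcal a X n \<omega> = erw_Mcal a Y n \<omega>'"
proof -
  have e1: "erw_M a X n \<omega> = erw_M a Y n \<omega>'" and e2: "erw_N a X n \<omega> = erw_N a Y n \<omega>'"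
    unfolding erw_M_def erw_N_def using erw_eps_local[of n X \<omega> Y \<omega>'] assms by (auto intro!: sum.cong)
  show ?thesis unfolding erw_Mcal_def e1 e2 ..
qed

lemma Mcal_MC: "erw_Mcal a X n \<omega> = MC a n (Vp X n \<omega>)"
  unfolding MC_def by (rule erw_Mcal_local) (auto simp: PX_def Vp_def)

lemma S_Sp: "erw_S X n \<omega> = Sp n (Vp X n \<omega>)"
  unfolding Sp_def by (rule erw_S_local) (auto simp: PX_def Vp_def)

lemma Sp_local: "\<forall>i\<in>{1..n}. x i = y i \<Longrightarrow> Sp n x = Sp n y"
  unfolding Sp_def by (rule erw_S_local) (auto simp: PX_def)

lemma MC_local: "\<forall>i\<in>{1..n}. x i = y i \<Longrightarrow> MC a n x = MC a n y"
  unfolding MC_def by (rule erw_Mcal_local) (auto simp: PX_def)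

lemma Sp_upd: "Sp n (y(Suc n := z)) = Sp n y"
  by (rule Sp_local) auto

lemma MC_upd: "MC a n (y(Suc n := z)) = MC a n y"
  by (rule MC_local) auto

lemma Sp_comp: "Sp n x $ j = (\<Sum>i\<in>{1..n}. dirvec (x i) $ j)"
  unfolding Sp_def erw_S_def PX_def by simp

lemma erw_S_Suc: "erw_S Y (Suc n) \<omega> = erw_S Y n \<omega> + dirvec (Y (Suc n) \<omega>)"
  unfolding erw_S_def by simp

lemma erw_eps_Suc:
  "erw_eps a Y (Suc n) \<omega> = dirvec (Y (Suc n) \<omega>) - (a / real n) *\<^sub>R erw_S Y n \<omega>"
  by (cases "n = 0") (auto simp: erw_eps_def erw_S_Suc algebra_simps erw_S_def)

lemma Mcal_incr:
  "erw_Mcal a Y (Suc n) \<omega> $ r - erw_Mcal a Y n \<omega> $ r =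
    cr a (fst r) (Suc n) * (dirvec (Y (Suc n) \<omega>) $ snd r - a / real n * erw_S Y n \<omega> $ snd r)"
proof -
  have M: "erw_M a Y (Suc n) \<omega> $ j = erw_M a Y n \<omega> $ j + acoef a (Suc n) * (dirvec (Y (Suc n) \<omega>) $ j - a / real n * erw_S Y n \<omega> $ j)" for j
    unfolding erw_M_def by (simp add: erw_eps_Suc algebra_simps)
  have N: "erw_N a Y (Suc n) \<omega> $ j = erw_N a Y n \<omega> $ j + (acoef a (Suc n) * bcoef a n) * (dirvec (Y (Suc n) \<omega>) $ j - a / real n * erw_S Y n \<omega> $ j)" for j
    unfolding erw_N_def by (simp add: erw_eps_Suc algebra_simps)
  show ?thesis unfolding erw_Mcal_def cr_def by (simp add: M N)
qed

lemma MC_incr: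
  "MC a (Suc n) (y(Suc n := z)) $ r =
    MC a n y $ r + cr a (fst r) (Suc n) * (dirvec z $ snd r - a / real n * Sp n y $ snd r)"
proof -
  have "MC a (Suc n) (y(Suc n := z)) $ r - MC a n (y(Suc n := z)) $ r =
      cr a (fst r) (Suc n) * (dirvec z $ snd r - a / real n * Sp n (y(Suc n := z)) $ snd r)"
    unfolding MC_def Sp_def by (subst Mcal_incr) (simp add: PX_def)
  then show ?thesis by (simp add: MC_upd Sp_upd)
qed

lemma sum_UNIV_dir: "(\<Sum>z\<in>(UNIV :: ('d::finite \<times> bool) set). f z) = (\<Sum>i\<in>UNIV. f (i, True) + f (i, False))"
proof -
  have "(\<Sum>z\<in>(UNIV :: ('d \<times> bool) set). f z) = (\<Sum>i\<in>UNIV. \<Sum>s\<in>UNIV. f (i, s))"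
    by (subst UNIV_Times_UNIV[symmetric], subst sum.cartesian_product) (simp add: case_prod_unfold)
  then show ?thesis by (simp add: UNIV_bool add.commute)
qed

lemma dirvec_pair: "dirvec (i, True) $ j + dirvec (i, False) $ j = 0"
  by (simp add: dirvec_def)

lemma sum_dirvec: "(\<Sum>z\<in>UNIV. dirvec z $ j) = 0"
  by (subst sum_UNIV_dir) (simp only: dirvec_pair sum.neutral_const)

context erw_loc
begin


lemma stp_mean_dir:
  "(\<Sum>z\<in>UNIV. stp p n y z * (dirvec z $ j)) = a / real n * (Sp n y $ j)"
  for y :: "nat \<Rightarrow> 'd \<times> bool"
  by (subst stp_mean[OF sum_dirvec]) (simp add: Sp_comp a_def)

lemma martingale_step:
  "AE \<omega> in M. real_cond_exp M (F n) (\<lambda>\<omega>. erw_Mcal a X (Suc n) \<omega> $ r) \<omega> = erw_Mcal a X n \<omega> $ r"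
proof -
  have "AE \<omega> in M. real_cond_exp M (F n) (\<lambda>\<omega>. MC a (Suc n) (Vp X (Suc n) \<omega>) $ r) \<omega> =
     (\<Sum>z\<in>UNIV. MC a (Suc n) ((Vp X n \<omega>)(Suc n := z)) $ r * stp p n (Vp X n \<omega>) z)"
    by (rule CE)
  moreover have "(\<Sum>z\<in>UNIV. MC a (Suc n) (y(Suc n := z)) $ r * stp p n y z) = MC a n y $ r" for y
  proof -
    have "(\<Sum>z\<in>UNIV. MC a (Suc n) (y(Suc n := z)) $ r * stp p n y z) =
      MC a n y $ r * (\<Sum>z\<in>UNIV. stp p n y z) + cr a (fst r) (Suc n) *
        ((\<Sum>z\<in>UNIV. stp p n y z * (dirvec z $ snd r)) - a / real n * Sp n y $ snd r * (\<Sum>z\<in>UNIV. stp p n y z))"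
      by (simp add: MC_incr algebra_simps sum.distrib sum_distrib_left sum_distrib_right sum_subtractf sum_divide_distrib)
    also have "\<dots> = MC a n y $ r" by (simp add: stp_sum1 stp_mean_dir)
    finally show ?thesis .
  qed
  ultimately show ?thesis by (simp add: Mcal_MC)
qed

lemma part1: "sq_int_martingale M F (erw_Mcal a X)"
  unfolding sq_int_martingale_def
proof (intro conjI allI)
  fix n :: nat and i
  show "subalgebra M (F n)" by (rule subalg)
  show "sets (F n) \<subseteq> sets (F (Suc n))" by (rule F_mono)
  show "(\<lambda>\<omega>. erw_Mcal a X n \<omega> $ i) \<in> borel_measurable (F n)"
    unfolding Mcal_MC by (rule funV_F)
  show "integrable M (\<lambda>\<omega>. erw_Mcal a X n \<omega> $ i)"
    unfolding Mcal_MC by (rule funV_int)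
  show "integrable M (\<lambda>\<omega>. (erw_Mcal a X n \<omega> $ i)\<^sup>2)"
    unfolding Mcal_MC by (rule funV_int)
  show "AE \<omega> in M. real_cond_exp M (F n) (\<lambda>\<omega>. erw_Mcal a X (Suc n) \<omega> $ i) \<omega> = erw_Mcal a X n \<omega> $ i"
    by (rule martingale_step)
qed

end



lemma sq_bracket: "\<exists>k::nat. k^2 \<le> n \<and> n < (k+1)^2"
proof (induction n)
  case 0 show ?case by (intro exI[of _ 0]) simp
next
  case (Suc n)
  then obtain k where k: "k^2 \<le> n" "n < (k+1)^2" by blast
  show ?case
  proof (cases "(k+1)^2 \<le> Suc n")
    case True
    have "Suc n < (k + 2)^2" using k(2) by (simp add: power2_eq_square algebra_simps)
    then show ?thesis using True by (intro exI[of _ "k+1"]) (simp add: numeral_2_eq_2 add.assoc)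
  next
    case False then show ?thesis using k by (intro exI[of _ k]) simp
  qed
qed

lemma incr_bound:
  fixes U :: "nat \<Rightarrow> real"
  assumes "\<And>n. \<bar>U (Suc n) - U n\<bar> \<le> 1" "m \<le> n"
  shows "\<bar>U n - U m\<bar> \<le> real (n - m)"
  using assms(2)
proof (induction n rule: dec_induct)
  case base then show ?case by simp
next
  case (step n)
  have "\<bar>U (Suc n) - U m\<bar> \<le> \<bar>U (Suc n) - U n\<bar> + \<bar>U n - U m\<bar>" by linarith
  also have "\<dots> \<le> 1 + real (n - m)" using assms(1)[of n] step.IH by linarith
  also have "\<dots> = real (Suc n - m)" using step.hyps by simp
  finally show ?case .
qed

lemma DET:
  fixes U :: "nat \<Rightarrow> real"
  assumes incr: "\<And>n. \<bar>U (Suc n) - U n\<bar> \<le> 1"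
    and sq: "\<And>r. eventually (\<lambda>k. \<bar>U (k^2)\<bar> < real (k^2) / real (Suc r)) sequentially"
  shows "(\<lambda>n. U n / real n) \<longlonglongrightarrow> 0"
proof (subst LIMSEQ_iff, intro allI impI)
  fix \<epsilon> :: real assume e: "\<epsilon> > 0"
  obtain r :: nat where r: "1 / real (Suc r) < \<epsilon> / 2"
    using reals_Archimedean[of "\<epsilon> / 2"] e by (auto simp: inverse_eq_divide)
  obtain K0 where K0: "\<And>k. k \<ge> K0 \<Longrightarrow> \<bar>U (k^2)\<bar> < real (k^2) / real (Suc r)"
    using sq[of r] unfolding eventually_sequentially by blast
  define B where "B = max K0 (nat \<lceil>4 / \<epsilon>\<rceil>)"
  show "\<exists>no. \<forall>n\<ge>no. norm (U n / real n - 0) < \<epsilon>"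
  proof (intro exI[of _ "(B+1)^2"] allI impI)
    fix n assume n: "(B+1)^2 \<le> n"
    obtain k where k: "k^2 \<le> n" "n < (k+1)^2" using sq_bracket by blast
    have "(B+1)^2 < (k+1)^2" using n k by linarith
    then have "B + 1 < k + 1" using power_less_imp_less_base by blast
    then have kB: "k \<ge> K0" "real k \<ge> 4 / \<epsilon>" unfolding B_def by linarith+
    have npos: "real n > 0" using n by (simp add: power2_eq_square)
    have d: "n - k^2 \<le> 2 * k" using k(2) by (simp add: power2_eq_square algebra_simps)
    have "\<bar>U n - U (k^2)\<bar> \<le> real (n - k^2)" using incr_bound[of U, OF incr k(1)] by simp
    also have "\<dots> \<le> 2 * real k" using d by linarith
    also have "\<dots> \<le> \<epsilon> / 2 * real (k^2)"
    proof -
      have "4 \<le> \<epsilon> * real k" using kB(2) e by (simp add: field_simps)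
      then have "4 * real k \<le> \<epsilon> * real k * real k" by (intro mult_right_mono) auto
      then show ?thesis by (simp add: power2_eq_square field_simps)
    qed
    finally have a1: "\<bar>U n - U (k^2)\<bar> \<le> \<epsilon> / 2 * real (k^2)" .
    have a2: "\<bar>U (k^2)\<bar> < \<epsilon> / 2 * real (k^2)"
    proof -
      have "\<bar>U (k^2)\<bar> < real (k^2) / real (Suc r)" by (rule K0[OF kB(1)])
      also have "\<dots> = real (k^2) * (1 / real (Suc r))" by simp
      also have "\<dots> \<le> real (k^2) * (\<epsilon> / 2)" using r by (intro mult_left_mono) auto
      finally show ?thesis by (simp add: mult.commute)
    qed
    have "\<bar>U n\<bar> < \<epsilon> * real (k^2)" using a1 a2 by linarith
    also have "\<dots> \<le> \<epsilon> * real n" using k(1) e by (intro mult_left_mono) auto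
    finally have "\<bar>U n\<bar> < \<epsilon> * real n" .
    then show "norm (U n / real n - 0) < \<epsilon>" using npos by (simp add: abs_div field_simps)
  qed
qed



definition Up :: "('d::finite \<times> bool \<Rightarrow> real) \<Rightarrow> nat \<Rightarrow> (nat \<Rightarrow> 'd \<times> bool) \<Rightarrow> real" where
  "Up u n y = (\<Sum>i\<in>{1..n}. u (y i))"

lemma Up_upd: "Up u (Suc n) (y(Suc n := z)) = Up u n y + u z"
  unfolding Up_def by (simp add: add.commute)

lemma Up_Vp: "Up u n (Vp X n \<omega>) = Up u n (\<lambda>i. X i \<omega>)"
  unfolding Up_def Vp_def by (intro sum.cong) auto

lemma Up_Suc: "Up u (Suc n) y = Up u n y + u (y (Suc n))"
  unfolding Up_def by simp

lemma sq_expand: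
  fixes U :: real
  shows "(\<Sum>z\<in>A. (U + f z)^2 * s z) = U^2 * (\<Sum>z\<in>A. s z) + 2 * U * (\<Sum>z\<in>A. s z * f z) + (\<Sum>z\<in>A. s z * (f z)^2)"
proof -
  have "(\<Sum>z\<in>A. (U + f z)^2 * s z) = (\<Sum>z\<in>A. U^2 * s z + 2 * U * (s z * f z) + s z * (f z)^2)"
    by (intro sum.cong) (simp_all add: power2_eq_square algebra_simps)
  then show ?thesis by (simp add: sum.distrib sum_distrib_left)
qed

context erw_loc
begin

lemma cylP: "{\<omega>\<in>space M. P (Vp X n \<omega>)} \<in> sets M"
proof -
  have "(\<lambda>\<omega>. Vp X n \<omega>) -` {x. P x} \<inter> space M \<in> sets M"
    by (rule measurable_sets[OF funV_M'[of "\<lambda>x. x" n]]) simp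
  moreover have "(\<lambda>\<omega>. Vp X n \<omega>) -` {x. P x} \<inter> space M = {\<omega>\<in>space M. P (Vp X n \<omega>)}" by auto
  ultimately show ?thesis by simp
qed

lemma prob_cyl: "measure M {\<omega>\<in>space M. P (Vp X n \<omega>)} = (\<Sum>x\<in>paths n. (if P x then 1 else 0) * pp n x)"
proof -
  have "measure M {\<omega>\<in>space M. P (Vp X n \<omega>)} = integral\<^sup>L M (indicator {\<omega>\<in>space M. P (Vp X n \<omega>)})"
    by (simp add: Int_absorb2)
  also have "\<dots> = integral\<^sup>L M (\<lambda>\<omega>. (\<lambda>x. if P x then 1 else 0) (Vp X n \<omega>))"
    by (intro Bochner_Integration.integral_cong refl) (auto simp: indicator_def)
  also have "\<dots> = (\<Sum>x\<in>paths n. (if P x then 1 else 0) * pp n x)" by (rule INTEG)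
  finally show ?thesis .
qed

context
  fixes u :: "'d \<times> bool \<Rightarrow> real"
  assumes su: "(\<Sum>z\<in>UNIV. u z) = 0" and ub: "\<And>z. \<bar>u z\<bar> \<le> 1"
begin

definition mom :: "nat \<Rightarrow> real" where
  "mom n = (\<Sum>x\<in>paths n. (Up u n x)^2 * pp n x)"

lemma mom_nonneg: "mom n \<ge> 0"
  unfolding mom_def by (intro sum_nonneg mult_nonneg_nonneg pp_nonneg) auto

lemma mom_rec: "mom (Suc n) \<le> (1 + 2 * a / real n) * mom n + 1"
proof -
  have "mom (Suc n) = (\<Sum>y\<in>paths n. (\<Sum>z\<in>UNIV. (Up u (Suc n) (y(Suc n := z)))^2 * stp p n y z) * pp n y)"
    unfolding mom_def by (rule CE_sum)
  also have "\<dots> \<le> (\<Sum>y\<in>paths n. ((1 + 2 * a / real n) * (Up u n y)^2 + 1) * pp n y)"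
  proof (intro sum_mono mult_right_mono pp_nonneg)
    fix y :: "nat \<Rightarrow> 'd \<times> bool"
    have m: "(\<Sum>z\<in>UNIV. stp p n y z * u z) = a / real n * Up u n y"
      unfolding Up_def a_def by (rule stp_mean[OF su])
    have s2: "(\<Sum>z\<in>UNIV. stp p n y z * (u z)^2) \<le> (\<Sum>z\<in>UNIV. stp p n y z * 1)"
    proof (intro sum_mono mult_left_mono stp_nonneg[OF p0 p1])
      fix z show "(u z)^2 \<le> 1" using ub[of z] by (simp add: abs_square_le_1)
    qed
    have "(\<Sum>z\<in>UNIV. (Up u (Suc n) (y(Suc n := z)))^2 * stp p n y z) =
        (\<Sum>z\<in>UNIV. (Up u n y + u z)^2 * stp p n y z)" by (simp add: Up_upd)
    also have "\<dots> = (Up u n y)^2 * 1 + 2 * Up u n y * (a / real n * Up u n y) + (\<Sum>z\<in>UNIV. stp p n y z * (u z)^2)"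
      by (simp only: sq_expand stp_sum1 m)
    also have "\<dots> \<le> (Up u n y)^2 * 1 + 2 * Up u n y * (a / real n * Up u n y) + 1"
      using s2 stp_sum1[of p n y] by simp
    also have "\<dots> = (1 + 2 * a / real n) * (Up u n y)^2 + 1"
      by (simp add: power2_eq_square algebra_simps)
    finally show "(\<Sum>z\<in>UNIV. (Up u (Suc n) (y(Suc n := z)))^2 * stp p n y z) \<le> (1 + 2 * a / real n) * (Up u n y)^2 + 1" .
  qed
  also have "\<dots> = (1 + 2 * a / real n) * mom n + (\<Sum>y\<in>(paths n :: (nat \<Rightarrow> 'd \<times> bool) set). pp n y)"
    unfolding mom_def by (simp add: algebra_simps sum.distrib sum_distrib_left)
  also have "\<dots> = (1 + 2 * a / real n) * mom n + 1" by (simp add: pp_sum1)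
  finally show ?thesis .
qed

lemma mom_bound:
  assumes ah: "a < 1/2"
  shows "mom n \<le> max 1 (1 / (1 - 2 * a)) * real n"
proof (induction n)
  case 0 then show ?case unfolding mom_def paths_def Up_def by simp
next
  case (Suc n)
  define K where "K = max 1 (1 / (1 - 2 * a))"
  have K1: "K \<ge> 1" unfolding K_def by simp
  have K2: "K * (1 - 2 * a) \<ge> 1"
  proof -
    have "1 / (1 - 2 * a) * (1 - 2 * a) = 1" using ah by simp
    moreover have "K * (1 - 2 * a) \<ge> 1 / (1 - 2 * a) * (1 - 2 * a)"
      unfolding K_def using ah by (intro mult_right_mono) auto
    ultimately show ?thesis by simp
  qed
  have IH: "mom n \<le> K * real n" using Suc unfolding K_def .
  show ?case unfolding K_def[symmetric]
  proof (cases "1 + 2 * a / real n \<ge> 0")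
    case True
    have "mom (Suc n) \<le> (1 + 2 * a / real n) * mom n + 1" by (rule mom_rec)
    also have "\<dots> \<le> (1 + 2 * a / real n) * (K * real n) + 1"
      using IH True by (intro add_right_mono mult_left_mono) auto
    also have "\<dots> \<le> K * real (Suc n)"
    proof (cases "n = 0")
      case True then show ?thesis using K1 by simp
    next
      case False
      then have "(1 + 2 * a / real n) * (K * real n) = K * real n + 2 * a * K" by (simp add: field_simps)
      then show ?thesis using K2 by (simp add: algebra_simps)
    qed
    finally show "mom (Suc n) \<le> K * real (Suc n)" .
  next
    case False
    have "mom (Suc n) \<le> (1 + 2 * a / real n) * mom n + 1" by (rule mom_rec)
    also have "\<dots> \<le> 1" using False mom_nonneg[of n] by (simp add: mult_nonpos_nonneg)
    also have "\<dots> \<le> K * real (Suc n)" using K1 by (simp add: order_trans[OF _ mult_right_mono[of 1 K]] ) 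
    finally show "mom (Suc n) \<le> K * real (Suc n)" .
  qed
qed

lemma tail:
  assumes c: "c > 0"
  shows "measure M {\<omega>\<in>space M. c \<le> \<bar>Up u n (Vp X n \<omega>)\<bar>} \<le> mom n / c^2"
proof -
  have "measure M {\<omega>\<in>space M. c \<le> \<bar>Up u n (Vp X n \<omega>)\<bar>} =
      (\<Sum>x\<in>paths n. (if c \<le> \<bar>Up u n x\<bar> then 1 else 0) * pp n x)" by (rule prob_cyl)
  also have "\<dots> \<le> (\<Sum>x\<in>paths n. ((Up u n x)^2 / c^2) * pp n x)"
  proof (intro sum_mono mult_right_mono pp_nonneg)
    fix x
    show "(if c \<le> \<bar>Up u n x\<bar> then 1 else 0) \<le> (Up u n x)^2 / c^2"
    proof (cases "c \<le> \<bar>Up u n x\<bar>")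
      case True
      then have "c^2 \<le> (Up u n x)^2" using c by (metis abs_le_square_iff abs_of_pos)
      then show ?thesis using True c by simp
    qed simp
  qed
  also have "\<dots> = mom n / c^2" unfolding mom_def by (simp add: sum_divide_distrib)
  finally show ?thesis .
qed

lemma LLN:
  assumes ah: "a < 1/2"
  shows "AE \<omega> in M. (\<lambda>n. Up u n (\<lambda>i. X i \<omega>) / real n) \<longlonglongrightarrow> 0"
proof -
  define K where "K = max 1 (1 / (1 - 2 * a))"
  have K0: "K \<ge> 0" unfolding K_def by simp
  have BC: "AE \<omega> in M. eventually (\<lambda>k. \<bar>Up u (k^2) (\<lambda>i. X i \<omega>)\<bar> < real (k^2) / real (Suc r)) sequentially" for r
  proof -
    define A where "A k = {\<omega>\<in>space M. real (k^2) / real (Suc r) \<le> \<bar>Up u (k^2) (Vp X (k^2) \<omega>)\<bar>}" for k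
    have As: "A k \<in> sets M" for k unfolding A_def by (rule cylP)
    have Ab: "measure M (A k) \<le> K * (real (Suc r))^2 * inverse (real k ^ 2)" if k: "k \<ge> 1" for k
    proof -
      have kp: "real k > 0" using k by simp
      have "measure M (A k) \<le> mom (k^2) / (real (k^2) / real (Suc r))^2"
        unfolding A_def by (rule tail) (use kp in simp)
      also have "\<dots> \<le> (K * real (k^2)) / (real (k^2) / real (Suc r))^2"
        using mom_bound[OF ah, of "k^2"] unfolding K_def[symmetric] by (intro divide_right_mono) auto
      also have "\<dots> = K * (real (Suc r))^2 * inverse (real k ^ 2)"
        using kp by (simp add: field_simps power2_eq_square)
      finally show ?thesis .
    qed
    have summ: "summable (\<lambda>k. measure M (A k))"
    proof (rule summable_comparison_test'[where N=1])
      show "summable (\<lambda>k. K * (real (Suc r))^2 * inverse (real k ^ 2))"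
        by (intro summable_mult inverse_power_summable) simp
      fix k :: nat assume "k \<ge> 1"
      then show "norm (measure M (A k)) \<le> K * (real (Suc r))^2 * inverse (real k ^ 2)"
        using Ab by simp
    qed
    have "AE \<omega> in M. eventually (\<lambda>k. \<omega> \<in> space M - A k) sequentially"
      by (rule borel_cantelli_AE1[OF As _ summ]) (simp add: emeasure_eq_measure)
    then show ?thesis
    proof (rule AE_mp[OF _ AE_I2[OF impI]])
      fix \<omega> assume "eventually (\<lambda>k. \<omega> \<in> space M - A k) sequentially"
      then show "eventually (\<lambda>k. \<bar>Up u (k^2) (\<lambda>i. X i \<omega>)\<bar> < real (k^2) / real (Suc r)) sequentially"
        by (rule eventually_mono) (auto simp: A_def Up_Vp)
    qed
  qed
  then have "AE \<omega> in M. \<forall>r. eventually (\<lambda>k. \<bar>Up u (k^2) (\<lambda>i. X i \<omega>)\<bar> < real (k^2) / real (Suc r)) sequentially"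
    by (simp add: AE_all_countable)
  then show ?thesis
  proof (rule AE_mp[OF _ AE_I2[OF impI]])
    fix \<omega> assume h: "\<forall>r. eventually (\<lambda>k. \<bar>Up u (k^2) (\<lambda>i. X i \<omega>)\<bar> < real (k^2) / real (Suc r)) sequentially"
    show "(\<lambda>n. Up u n (\<lambda>i. X i \<omega>) / real n) \<longlonglongrightarrow> 0"
    proof (rule DET)
      fix n show "\<bar>Up u (Suc n) (\<lambda>i. X i \<omega>) - Up u n (\<lambda>i. X i \<omega>)\<bar> \<le> 1"
        using ub by (simp add: Up_Suc)
    qed (use h in blast)
  qed
qed

end

end



definition indj :: "'d::finite \<Rightarrow> 'd \<times> bool \<Rightarrow> real" where
  "indj j z = (if fst z = j then 1 else 0) - 1 / real CARD('d)"

lemma sum_indj: "(\<Sum>z\<in>UNIV. indj j z) = 0" for j :: "'d::finite"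
proof -
  have "(\<Sum>z\<in>UNIV. indj j z) = (\<Sum>i\<in>UNIV. (if i = j then 2 else 0) - 2 / real CARD('d))"
    by (subst sum_UNIV_dir) (intro sum.cong, auto simp: indj_def)
  also have "\<dots> = 2 - real CARD('d) * (2 / real CARD('d))"
    by (simp add: sum_subtractf sum.delta)
  also have "\<dots> = 0" using card_pos_real[where 'a='d] by simp
  finally show ?thesis .
qed

lemma indj_bound: "\<bar>indj j z\<bar> \<le> 1" for j :: "'d::finite"
proof -
  have c: "real CARD('d) \<ge> 1" by (rule card_pos_real)
  then have "1 / real CARD('d) \<le> 1" "1 / real CARD('d) \<ge> 0" by auto
  then show ?thesis unfolding indj_def by auto
qed

lemma dirvec_bound: "\<bar>dirvec z $ j\<bar> \<le> 1"
  unfolding dirvec_def by auto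

lemma dirvec_prod: "dirvec z $ j * dirvec z $ j' = (if j = j' then indj j z + 1 / real CARD('d) else 0)"
  for j :: "'d::finite"
  unfolding dirvec_def indj_def by auto

definition Cf :: "real \<Rightarrow> real \<Rightarrow> nat \<Rightarrow> (nat \<Rightarrow> 'd::finite \<times> bool) \<Rightarrow> 'd \<Rightarrow> 'd \<Rightarrow> real" where
  "Cf p a n y j j' = (\<Sum>z\<in>UNIV. stp p n y z * ((dirvec z $ j - a / real n * Sp n y $ j) * (dirvec z $ j' - a / real n * Sp n y $ j')))"

context erw_loc
begin

lemma Cf_formula:
  "Cf p a n y j j' = (if j = j' then 1 / real CARD('d) + a / real n * Up (indj j) n y else 0)
      - (a / real n)^2 * (Sp n y $ j * Sp n y $ j')"
  for y :: "nat \<Rightarrow> 'd \<times> bool"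
proof -
  define m where "m j = a / real n * Sp n y $ j" for j
  have e1: "(\<Sum>z\<in>UNIV. stp p n y z * dirvec z $ j) = m j" for j
    unfolding m_def by (rule stp_mean_dir)
  have e2: "(\<Sum>z\<in>UNIV. stp p n y z * (dirvec z $ j * dirvec z $ j')) =
       (if j = j' then 1 / real CARD('d) + a / real n * Up (indj j) n y else 0)"
  proof (cases "j = j'")
    case True
    have "(\<Sum>z\<in>UNIV. stp p n y z * (dirvec z $ j * dirvec z $ j')) =
        (\<Sum>z\<in>UNIV. stp p n y z * indj j z + 1 / real CARD('d) * stp p n y z)"
      using True by (intro sum.cong refl) (simp add: dirvec_prod algebra_simps)
    also have "\<dots> = (\<Sum>z\<in>UNIV. stp p n y z * indj j z) + 1 / real CARD('d) * (\<Sum>z\<in>UNIV. stp p n y z)"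
      by (simp add: sum.distrib sum_distrib_left)
    also have "\<dots> = a / real n * Up (indj j) n y + 1 / real CARD('d)"
      unfolding Up_def a_def by (simp add: stp_mean[OF sum_indj] stp_sum1)
    finally show ?thesis using True by simp
  qed (simp add: dirvec_prod)
  have "Cf p a n y j j' = (\<Sum>z\<in>UNIV. stp p n y z * (dirvec z $ j * dirvec z $ j'))
      - m j' * (\<Sum>z\<in>UNIV. stp p n y z * dirvec z $ j) - m j * (\<Sum>z\<in>UNIV. stp p n y z * dirvec z $ j')
      + m j * m j' * (\<Sum>z\<in>UNIV. stp p n y z)"
    unfolding Cf_def m_def[symmetric]
    by (simp add: algebra_simps sum.distrib sum_subtractf sum_distrib_left)
  also have "\<dots> = (if j = j' then 1 / real CARD('d) + a / real n * Up (indj j) n y else 0) - m j * m j'"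
    by (simp add: e1 e2 stp_sum1)
  finally show ?thesis unfolding m_def by (simp add: power2_eq_square)
qed

lemma QV_CE1:
  "AE \<omega> in M. real_cond_exp M (F n)
      (\<lambda>\<omega>'. (erw_Mcal a X (Suc n) \<omega>' - erw_Mcal a X n \<omega>') $ r * (erw_Mcal a X (Suc n) \<omega>' - erw_Mcal a X n \<omega>') $ c) \<omega>
    = cr a (fst r) (Suc n) * cr a (fst c) (Suc n) * Cf p a n (Vp X n \<omega>) (snd r) (snd c)"
proof -
  define h where "h x = (MC a (Suc n) x $ r - MC a n x $ r) * (MC a (Suc n) x $ c - MC a n x $ c)" for x
  have eq: "(\<lambda>\<omega>'. (erw_Mcal a X (Suc n) \<omega>' - erw_Mcal a X n \<omega>') $ r * (erw_Mcal a X (Suc n) \<omega>' - erw_Mcal a X n \<omega>') $ c)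
      = (\<lambda>\<omega>'. h (Vp X (Suc n) \<omega>'))"
  proof
    fix \<omega>'
    have "erw_Mcal a X n \<omega>' = MC a n (Vp X (Suc n) \<omega>')"
      unfolding MC_def by (rule erw_Mcal_local) (auto simp: PX_def Vp_def)
    then show "(erw_Mcal a X (Suc n) \<omega>' - erw_Mcal a X n \<omega>') $ r * (erw_Mcal a X (Suc n) \<omega>' - erw_Mcal a X n \<omega>') $ c
      = h (Vp X (Suc n) \<omega>')" unfolding h_def by (simp add: Mcal_MC)
  qed
  have g: "(\<Sum>z\<in>UNIV. h (y(Suc n := z)) * stp p n y z) = cr a (fst r) (Suc n) * cr a (fst c) (Suc n) * Cf p a n y (snd r) (snd c)" for y
    unfolding h_def Cf_def by (simp add: MC_incr MC_upd sum_distrib_left algebra_simps)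
  show ?thesis unfolding eq using CE[of n h] by (simp add: g)
qed

lemma QV_CE:
  "AE \<omega> in M. \<forall>n r c. real_cond_exp M (F n)
      (\<lambda>\<omega>'. (erw_Mcal a X (Suc n) \<omega>' - erw_Mcal a X n \<omega>') $ r * (erw_Mcal a X (Suc n) \<omega>' - erw_Mcal a X n \<omega>') $ c) \<omega>
    = cr a (fst r) (Suc n) * cr a (fst c) (Suc n) * Cf p a n (Vp X n \<omega>) (snd r) (snd c)"
proof -
  have cU: "countable (UNIV :: (2 \<times> 'd) set)" by (rule countable_finite) simp
  have "\<forall>n. AE \<omega> in M. \<forall>r\<in>UNIV. \<forall>c\<in>UNIV. real_cond_exp M (F n)
      (\<lambda>\<omega>'. (erw_Mcal a X (Suc n) \<omega>' - erw_Mcal a X n \<omega>') $ r * (erw_Mcal a X (Suc n) \<omega>' - erw_Mcal a X n \<omega>') $ c) \<omega>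
    = cr a (fst r) (Suc n) * cr a (fst c) (Suc n) * Cf p a n (Vp X n \<omega>) (snd r) (snd c)"
    by (intro allI, subst AE_ball_countable[OF cU], intro ballI, subst AE_ball_countable[OF cU], intro ballI, rule QV_CE1)
  then have "AE \<omega> in M. \<forall>n. \<forall>r\<in>UNIV. \<forall>c\<in>UNIV. real_cond_exp M (F n)
      (\<lambda>\<omega>'. (erw_Mcal a X (Suc n) \<omega>' - erw_Mcal a X n \<omega>') $ r * (erw_Mcal a X (Suc n) \<omega>' - erw_Mcal a X n \<omega>') $ c) \<omega>
    = cr a (fst r) (Suc n) * cr a (fst c) (Suc n) * Cf p a n (Vp X n \<omega>) (snd r) (snd c)"
    by (subst AE_all_countable) assumption
  then show ?thesis by simp
qed

lemma Cf_lim: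
  assumes ah: "a < 1/2"
  shows "AE \<omega> in M. \<forall>j j'. (\<lambda>n. Cf p a n (Vp X n \<omega>) j j') \<longlonglongrightarrow> (if j = j' then 1 / real CARD('d) else 0)"
proof -
  have cU: "countable (UNIV :: 'd set)" by (rule countable_finite) simp
  have A1: "AE \<omega> in M. \<forall>j\<in>UNIV. (\<lambda>n. Up (\<lambda>z. dirvec z $ j) n (\<lambda>i. X i \<omega>) / real n) \<longlonglongrightarrow> 0"
    by (subst AE_ball_countable[OF cU], intro ballI, rule LLN[OF sum_dirvec dirvec_bound ah])
  have A2: "AE \<omega> in M. \<forall>j\<in>UNIV. (\<lambda>n. Up (indj j) n (\<lambda>i. X i \<omega>) / real n) \<longlonglongrightarrow> 0"
    by (subst AE_ball_countable[OF cU], intro ballI, rule LLN[OF sum_indj indj_bound ah])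
  show ?thesis
  proof (rule AE_mp[OF AE_conjI[OF A1 A2] AE_I2[OF impI]], intro allI)
    fix \<omega> j j'
    assume h: "(\<forall>j\<in>UNIV. (\<lambda>n. Up (\<lambda>z. dirvec z $ j) n (\<lambda>i. X i \<omega>) / real n) \<longlonglongrightarrow> 0) \<and>
        (\<forall>j\<in>UNIV. (\<lambda>n. Up (indj j) n (\<lambda>i. X i \<omega>) / real n) \<longlonglongrightarrow> 0)"
    have S: "Sp n (Vp X n \<omega>) $ j = Up (\<lambda>z. dirvec z $ j) n (\<lambda>i. X i \<omega>)" for n j
      unfolding Sp_comp Up_def Vp_def by (intro sum.cong) auto
    have eq: "Cf p a n (Vp X n \<omega>) j j' =
        (if j = j' then 1 / real CARD('d) + a * (Up (indj j) n (\<lambda>i. X i \<omega>) / real n) else 0)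
        - a^2 * ((Up (\<lambda>z. dirvec z $ j) n (\<lambda>i. X i \<omega>) / real n) * (Up (\<lambda>z. dirvec z $ j') n (\<lambda>i. X i \<omega>) / real n))" for n
      unfolding Cf_formula S by (simp add: Up_Vp power2_eq_square field_simps)
    have l1: "(\<lambda>n. (if j = j' then 1 / real CARD('d) + a * (Up (indj j) n (\<lambda>i. X i \<omega>) / real n) else 0))
        \<longlonglongrightarrow> (if j = j' then 1 / real CARD('d) + a * 0 else 0)"
    proof -
      have t: "(\<lambda>n. Up (indj j) n (\<lambda>i. X i \<omega>) / real n) \<longlonglongrightarrow> 0" using h by blast
      have "(\<lambda>n. 1 / real CARD('d) + a * (Up (indj j) n (\<lambda>i. X i \<omega>) / real n)) \<longlonglongrightarrow> 1 / real CARD('d) + a * 0"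
        by (intro tendsto_intros t)
      then show ?thesis by (cases "j = j'") simp_all
    qed
    have l2: "(\<lambda>n. a^2 * ((Up (\<lambda>z. dirvec z $ j) n (\<lambda>i. X i \<omega>) / real n) * (Up (\<lambda>z. dirvec z $ j') n (\<lambda>i. X i \<omega>) / real n)))
        \<longlonglongrightarrow> a^2 * (0 * 0)"
    proof -
      have t1: "(\<lambda>n. Up (\<lambda>z. dirvec z $ j) n (\<lambda>i. X i \<omega>) / real n) \<longlonglongrightarrow> 0" using h by blast
      have t2: "(\<lambda>n. Up (\<lambda>z. dirvec z $ j') n (\<lambda>i. X i \<omega>) / real n) \<longlonglongrightarrow> 0" using h by blast
      show ?thesis by (intro tendsto_mult tendsto_const t1 t2)
    qed
    show "(\<lambda>n. Cf p a n (Vp X n \<omega>) j j') \<longlonglongrightarrow> (if j = j' then 1 / real CARD('d) else 0)"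
    proof -
      have E1: "(\<lambda>n. Cf p a n (Vp X n \<omega>) j j') = (\<lambda>n. (if j = j' then 1 / real CARD('d) + a * (Up (indj j) n (\<lambda>i. X i \<omega>) / real n) else 0)
        - a^2 * ((Up (\<lambda>z. dirvec z $ j) n (\<lambda>i. X i \<omega>) / real n) * (Up (\<lambda>z. dirvec z $ j') n (\<lambda>i. X i \<omega>) / real n)))"
        by (rule ext) (rule eq)
      have E2: "(if j = j' then 1 / real CARD('d) else 0) = (if j = j' then 1 / real CARD('d) + a * 0 else 0) - a^2 * (0 * 0)"
        by simp
      show ?thesis unfolding E1 E2 by (rule tendsto_diff[OF l1 l2])
    qed
  qed
qed

end



lemma WC0:
  fixes t y :: "nat \<Rightarrow> real"
  assumes t: "\<And>k. t k \<ge> 0" and T: "filterlim (\<lambda>n. \<Sum>k=1..n. t k) at_top sequentially"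
    and y: "y \<longlonglongrightarrow> 0"
  shows "(\<lambda>n. (\<Sum>k=1..n. t k * y k) / (\<Sum>k=1..n. t k)) \<longlonglongrightarrow> 0"
proof (subst LIMSEQ_iff, intro allI impI)
  fix \<epsilon> :: real assume e: "\<epsilon> > 0"
  obtain N where N: "\<And>k. k \<ge> N \<Longrightarrow> \<bar>y k\<bar> < \<epsilon> / 2"
    using y e unfolding LIMSEQ_iff by (metis half_gt_zero real_norm_def diff_zero)
  define C where "C = (\<Sum>k=1..N. t k * \<bar>y k\<bar>)"
  have C0: "C \<ge> 0" unfolding C_def using t by (intro sum_nonneg) auto
  have ev: "eventually (\<lambda>n. (\<Sum>k=1..n. t k) > 2 * C / \<epsilon> + 1) sequentially"
    using T by (simp add: filterlim_at_top_dense)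
  then obtain N2 where N2: "\<And>n. n \<ge> N2 \<Longrightarrow> (\<Sum>k=1..n. t k) > 2 * C / \<epsilon> + 1"
    unfolding eventually_sequentially by blast
  show "\<exists>no. \<forall>n\<ge>no. norm ((\<Sum>k=1..n. t k * y k) / (\<Sum>k=1..n. t k) - 0) < \<epsilon>"
  proof (intro exI[of _ N2] allI impI)
    fix n assume n: "n \<ge> N2"
    define T where "T = (\<Sum>k=1..n. t k)"
    have TC: "T > 2 * C / \<epsilon> + 1" using N2[OF n] unfolding T_def .
    have Tpos: "T > 0" using TC C0 e by (smt (verit) divide_nonneg_pos)
    have "\<bar>\<Sum>k=1..n. t k * y k\<bar> \<le> (\<Sum>k=1..n. t k * \<bar>y k\<bar>)"
      using t by (simp add: sum_abs[THEN order_trans] abs_mult)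
    also have "\<dots> \<le> (\<Sum>k=1..n. (if k \<le> N then t k * \<bar>y k\<bar> else 0) + t k * (\<epsilon> / 2))"
    proof (intro sum_mono)
      fix k
      show "t k * \<bar>y k\<bar> \<le> (if k \<le> N then t k * \<bar>y k\<bar> else 0) + t k * (\<epsilon> / 2)"
      proof (cases "k \<le> N")
        case True then show ?thesis using t[of k] e by simp
      next
        case False
        have "t k * \<bar>y k\<bar> \<le> t k * (\<epsilon> / 2)"
          by (rule mult_left_mono) (use N[of k] False t[of k] in auto)
        then show ?thesis using False by simp
      qed
    qed
    also have "\<dots> = (\<Sum>k\<in>{k\<in>{1..n}. k \<le> N}. t k * \<bar>y k\<bar>) + \<epsilon> / 2 * T"
    proof -
      have "(\<Sum>k=1..n. if k \<le> N then t k * \<bar>y k\<bar> else 0) = (\<Sum>k\<in>{k\<in>{1..n}. k \<le> N}. t k * \<bar>y k\<bar>)"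
        by (rule sum.inter_filter[symmetric]) simp
      then show ?thesis unfolding T_def by (simp add: sum.distrib sum_distrib_left mult.commute)
    qed
    also have "(\<Sum>k\<in>{k\<in>{1..n}. k \<le> N}. t k * \<bar>y k\<bar>) \<le> C"
      unfolding C_def using t by (intro sum_mono2) auto
    finally have b: "\<bar>\<Sum>k=1..n. t k * y k\<bar> \<le> C + \<epsilon> / 2 * T" by simp
    have "\<bar>(\<Sum>k=1..n. t k * y k) / T\<bar> \<le> (C + \<epsilon> / 2 * T) / T"
      using b Tpos by (simp add: abs_div divide_right_mono)
    also have "\<dots> = C / T + \<epsilon> / 2" using Tpos by (simp add: field_simps)
    also have "C / T < \<epsilon> / 2"
    proof -
      have "2 * C / \<epsilon> < T" using TC by linarith
      then have "2 * C < T * \<epsilon>" using e by (simp add: field_simps)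
      then show ?thesis using Tpos e by (simp add: field_simps)
    qed
    finally show "norm ((\<Sum>k=1..n. t k * y k) / (\<Sum>k=1..n. t k) - 0) < \<epsilon>"
      unfolding T_def[symmetric] by simp
  qed
qed

lemma WC:
  fixes t x :: "nat \<Rightarrow> real"
  assumes t: "\<And>k. t k \<ge> 0" and T: "filterlim (\<lambda>n. \<Sum>k=1..n. t k) at_top sequentially"
    and x: "x \<longlonglongrightarrow> L"
  shows "(\<lambda>n. (\<Sum>k=1..n. t k * x k) / (\<Sum>k=1..n. t k)) \<longlonglongrightarrow> L"
proof -
  have y: "(\<lambda>k. x k - L) \<longlonglongrightarrow> 0" using LIM_zero[OF x] .
  have l: "(\<lambda>n. L + (\<Sum>k=1..n. t k * (x k - L)) / (\<Sum>k=1..n. t k)) \<longlonglongrightarrow> L + 0"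
    by (intro tendsto_add tendsto_const WC0[OF t T y])
  have ev: "eventually (\<lambda>n. (\<Sum>k=1..n. t k) > 0) sequentially"
    using T by (simp add: filterlim_at_top_dense)
  have ev2: "eventually (\<lambda>n. L + (\<Sum>k=1..n. t k * (x k - L)) / (\<Sum>k=1..n. t k) =
      (\<Sum>k=1..n. t k * x k) / (\<Sum>k=1..n. t k)) sequentially"
  proof (rule eventually_mono[OF ev])
    fix n assume "(\<Sum>k=1..n. t k) > 0"
    then show "L + (\<Sum>k=1..n. t k * (x k - L)) / (\<Sum>k=1..n. t k) = (\<Sum>k=1..n. t k * x k) / (\<Sum>k=1..n. t k)"
      by (simp add: field_simps sum_subtractf sum_distrib_left sum_distrib_right)
  qed
  have l': "(\<lambda>n. L + (\<Sum>k=1..n. t k * (x k - L)) / (\<Sum>k=1..n. t k)) \<longlonglongrightarrow> L" using l by simp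
  show ?thesis by (rule iffD1[OF tendsto_cong[OF ev2] l'])
qed

lemma GL:
  fixes t x \<rho> B :: "nat \<Rightarrow> real"
  assumes t: "\<And>k. t k \<ge> 0" and T: "filterlim (\<lambda>n. \<Sum>k=1..n. t k) at_top sequentially"
    and x: "x \<longlonglongrightarrow> L" and \<rho>: "\<rho> \<longlonglongrightarrow> R" and R: "R \<noteq> 0"
    and B: "\<And>n. n \<ge> 1 \<Longrightarrow> B n = \<beta> + (\<Sum>k=1..n. t k * \<rho> k)"
  shows "(\<lambda>n. (\<Sum>k=1..n. t k * x k) / B n) \<longlonglongrightarrow> L / R"
proof -
  let ?T = "\<lambda>n. \<Sum>k=1..n. t k"
  have l1: "(\<lambda>n. (\<Sum>k=1..n. t k * x k) / ?T n) \<longlonglongrightarrow> L" by (rule WC[OF t T x])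
  have l2: "(\<lambda>n. (\<Sum>k=1..n. t k * \<rho> k) / ?T n) \<longlonglongrightarrow> R" by (rule WC[OF t T \<rho>])
  have l3: "(\<lambda>n. \<beta> / ?T n) \<longlonglongrightarrow> 0"
    by (rule tendsto_divide_0[OF tendsto_const]) (rule filterlim_at_top_imp_at_infinity[OF T])
  have l4: "(\<lambda>n. ((\<Sum>k=1..n. t k * x k) / ?T n) / (\<beta> / ?T n + (\<Sum>k=1..n. t k * \<rho> k) / ?T n)) \<longlonglongrightarrow> L / (0 + R)"
    using R by (intro tendsto_divide tendsto_add l1 l2 l3) auto
  have ev: "eventually (\<lambda>n. ?T n > 0 \<and> n \<ge> 1) sequentially"
    using T by (simp add: filterlim_at_top_dense eventually_conj_iff eventually_ge_at_top)
  have ev2: "eventually (\<lambda>n. ((\<Sum>k=1..n. t k * x k) / ?T n) / (\<beta> / ?T n + (\<Sum>k=1..n. t k * \<rho> k) / ?T n) =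
      (\<Sum>k=1..n. t k * x k) / B n) sequentially"
  proof (rule eventually_mono[OF ev])
    fix n assume n: "?T n > 0 \<and> n \<ge> 1"
    then have "\<beta> / ?T n + (\<Sum>k=1..n. t k * \<rho> k) / ?T n = B n / ?T n"
      using B[of n] by (simp add: add_divide_distrib)
    then show "((\<Sum>k=1..n. t k * x k) / ?T n) / (\<beta> / ?T n + (\<Sum>k=1..n. t k * \<rho> k) / ?T n) =
      (\<Sum>k=1..n. t k * x k) / B n" using n by simp
  qed
  have l4': "(\<lambda>n. ((\<Sum>k=1..n. t k * x k) / ?T n) / (\<beta> / ?T n + (\<Sum>k=1..n. t k * \<rho> k) / ?T n)) \<longlonglongrightarrow> L / R"
    using l4 by simp
  show ?thesis by (rule iffD1[OF tendsto_cong[OF ev2] l4'])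
qed

lemma TEL:
  fixes t \<rho> B :: "nat \<Rightarrow> real"
  assumes "\<And>k. k \<ge> 2 \<Longrightarrow> B k - B (k - 1) = t k * \<rho> k" and "B 1 = \<beta> + t 1 * \<rho> 1"
  shows "n \<ge> 1 \<Longrightarrow> B n = \<beta> + (\<Sum>k=1..n. t k * \<rho> k)"
proof (induction n rule: dec_induct)
  case base then show ?case using assms(2) by simp
next
  case (step n)
  have "B (Suc n) = B n + t (Suc n) * \<rho> (Suc n)" using assms(1)[of "Suc n"] step.hyps by simp
  then show ?case using step.IH by simp
qed

lemma TI:
  fixes t :: "nat \<Rightarrow> real"
  assumes t: "\<And>k. t k \<ge> 0" and g: "\<gamma> > 0" and lb: "\<And>k. k \<ge> K \<Longrightarrow> t k \<ge> \<gamma> / real k"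
  shows "filterlim (\<lambda>n. \<Sum>k=1..n. t k) at_top sequentially"
proof (rule filterlim_at_top_mono)
  show "filterlim (\<lambda>n. \<gamma> * (harm n - harm K)) at_top sequentially"
    by (intro filterlim_tendsto_pos_mult_at_top[OF tendsto_const g] filterlim_tendsto_add_at_top[OF tendsto_const harm_at_top, where c="- harm K", simplified])
  show "eventually (\<lambda>n. \<gamma> * (harm n - harm K) \<le> (\<Sum>k=1..n. t k)) sequentially"
  proof (rule eventually_mono[OF eventually_ge_at_top[of K]])
    fix n assume n: "K \<le> n"
    have "\<gamma> * (harm n - harm K) = (\<Sum>k\<in>{K<..n}. \<gamma> / real k)"
    proof -
      have "harm n = harm K + (\<Sum>k\<in>{K<..n}. inverse (real k))"
        using n
      proof (induction n rule: dec_induct)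
        case base then show ?case by simp
      next
        case (step m)
        have "{K<..Suc m} = insert (Suc m) {K<..m}" using step.hyps by auto
        then show ?case using step.IH by (simp add: harm_Suc)
      qed
      then show ?thesis by (simp add: sum_distrib_left divide_inverse)
    qed
    also have "\<dots> \<le> (\<Sum>k\<in>{K<..n}. t k)" using lb by (intro sum_mono) auto
    also have "\<dots> \<le> (\<Sum>k=1..n. t k)"
    proof (cases "K = 0")
      case True
      have "(\<Sum>k\<in>{K<..n}. t k) = (\<Sum>k=1..n. t k)" using True by (intro sum.cong) auto
      then show ?thesis by simp
    next
      case False then show ?thesis using t by (intro sum_mono2) auto
    qed
    finally show "\<gamma> * (harm n - harm K) \<le> (\<Sum>k=1..n. t k)" .
  qed
qed



lemma acoef_Suc: "k \<ge> 1 \<Longrightarrow> acoef a (Suc k) = acoef a k * (real k / (real k + a))"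
  unfolding acoef_def by simp

lemma acoef_1: "acoef a 1 = 1" unfolding acoef_def by simp
lemma acoef_2: "acoef a 2 = 1 / (1 + a)"
  using acoef_Suc[of 1 a] acoef_1[of a] by (simp add: numeral_2_eq_2 add.commute)

lemma acoef_pos: "a > -1 \<Longrightarrow> acoef a k > 0"
  unfolding acoef_def by (intro prod_pos) (auto intro!: divide_pos_pos)

lemma frac_aux:
  fixes A c x :: real
  assumes "A \<noteq> 0" "c \<noteq> 0"
  shows "x / (c * A) + 1 / A = (x + c) / (c * A)"
  using assms by (simp add: field_simps)

lemma frac_aux2:
  fixes A c m a :: real
  assumes "A \<noteq> 0" "c \<noteq> 0" "m \<noteq> 0" "m + a \<noteq> 0"
  shows "m / (c * (A * (m / (m + a)))) = (m + a) / (c * A)"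
  using assms by (simp add: field_simps)

lemma bcoef_eq:
  assumes a: "a > -1"
  shows "bcoef a n = real n / ((1 + a) * acoef a (Suc n))"
proof (induction n)
  case 0 then show ?case by (simp add: bcoef_def)
next
  case (Suc n)
  have A1: "acoef a (Suc n) > 0" using acoef_pos[OF a] .
  have A2: "acoef a (Suc (Suc n)) = acoef a (Suc n) * (real (Suc n) / (real (Suc n) + a))"
    by (rule acoef_Suc) simp
  have p1: "real (Suc n) + a > 0" using a by simp
  have p2: "1 + a > 0" using a by simp
  have "bcoef a (Suc n) = bcoef a n + 1 / acoef a (Suc n)" unfolding bcoef_def by simp
  also have "\<dots> = real n / ((1 + a) * acoef a (Suc n)) + 1 / acoef a (Suc n)" using Suc by simp
  also have "\<dots> = (real n + 1 + a) / ((1 + a) * acoef a (Suc n))"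
  proof -
    have "acoef a (Suc n) \<noteq> 0" "1 + a \<noteq> 0" using A1 p2 by auto
    then show ?thesis using frac_aux[of "acoef a (Suc n)" "1 + a" "real n"] by (simp add: add.assoc)
  qed
  also have "\<dots> = real (Suc n) / ((1 + a) * acoef a (Suc (Suc n)))"
  proof -
    have "real (Suc n) / ((1 + a) * (acoef a (Suc n) * (real (Suc n) / (real (Suc n) + a))))
        = (real (Suc n) + a) / ((1 + a) * acoef a (Suc n))"
      using frac_aux2[of "acoef a (Suc n)" "1 + a" "real (Suc n)" a] A1 p1 p2 by simp
    then show ?thesis unfolding A2 by simp
  qed
  finally show ?case .
qed

lemma cr1: "cr a 1 k = acoef a k" unfolding cr_def by simp

lemma cr2:
  assumes a: "a > -1" and k: "k \<ge> 1"
  shows "cr a 2 k = real (k - 1) / (1 + a)"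
proof -
  have "Suc (k - 1) = k" using k by simp
  then have "bcoef a (k - 1) = real (k - 1) / ((1 + a) * acoef a k)" using bcoef_eq[OF a, of "k - 1"] by simp
  then show ?thesis unfolding cr_def using acoef_pos[OF a, of k] by simp
qed

lemma growth:
  assumes a1: "a > -1" and a2: "a < 1/2"
  shows "\<exists>c>0. \<exists>K\<ge>1. \<forall>k\<ge>K. real k * (acoef a k)^2 \<ge> c"
proof -
  define K where "K = nat \<lceil>1 / (1 - 2 * a)\<rceil> + 1"
  have K1: "K \<ge> 1" unfolding K_def by simp
  have KK: "real K \<ge> 1 / (1 - 2 * a)" unfolding K_def by linarith
  have stepK: "real (Suc k) * (acoef a (Suc k))^2 \<ge> real k * (acoef a k)^2" if k: "k \<ge> K" for k
  proof -
    have k1: "k \<ge> 1" using k K1 by simp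
    have kp: "real k + a > 0" using k1 a1 by simp
    have "real k \<ge> 1 / (1 - 2 * a)" using k KK by linarith
    then have "real k * (1 - 2 * a) \<ge> 1" using a2 by (simp add: field_simps)
    moreover have "a^2 < 1" using a1 a2 by (simp add: abs_square_less_1)
    ultimately have "real k * (real k + 1) \<ge> (real k + a)^2" by (simp add: power2_eq_square algebra_simps)
    then have "real k * (real k + 1) / (real k + a)^2 \<ge> 1" using kp by simp
    then have "(acoef a k)^2 * (real k * (real k + 1) / (real k + a)^2) \<ge> (acoef a k)^2 * 1"
      by (intro mult_left_mono) auto
    then have "real k * (acoef a k)^2 \<le> real k * ((acoef a k)^2 * (real k * (real k + 1) / (real k + a)^2))"
      by (intro mult_left_mono) auto
    also have "\<dots> = (real k + 1) * ((acoef a k) * (real k / (real k + a)))^2"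
      using kp by (simp add: power2_eq_square field_simps)
    finally have "real k * (acoef a k)^2 \<le> real (Suc k) * ((acoef a k) * (real k / (real k + a)))^2"
      by (simp add: add.commute)
    then show ?thesis using acoef_Suc[OF k1, of a] by simp
  qed
  have mono: "k \<ge> K \<Longrightarrow> real k * (acoef a k)^2 \<ge> real K * (acoef a K)^2" for k
  proof (induction k rule: dec_induct)
    case base then show ?case by simp
  next
    case (step k) then show ?case using stepK[of k] by linarith
  qed
  have "real K * (acoef a K)^2 > 0" using K1 acoef_pos[OF a1, of K] by simp
  then show ?thesis using K1 mono by blast
qed

lemma rho11: "(\<lambda>k::nat. real k * (real k / (real k + a))^2 - (real k - 1)) \<longlonglongrightarrow> 1 - 2 * a"
  by real_asymp

lemma rho12: "(\<lambda>k::nat. (real k ^ 3 / (real k + a) - (real k - 1)^2) / (real k - 1)) \<longlonglongrightarrow> 2 - a"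
  by real_asymp

lemma rho22: "(\<lambda>k::nat. (real k ^ 3 - (real k - 1)^3) / (real k - 1)^2) \<longlonglongrightarrow> 3"
  by real_asymp

lemma CASE:
  fixes t x \<rho> B E :: "nat \<Rightarrow> real"
  assumes t: "\<And>k. t k \<ge> 0" and T: "filterlim (\<lambda>n. \<Sum>k=1..n. t k) at_top sequentially"
    and x: "x \<longlonglongrightarrow> L" and \<rho>: "\<rho> \<longlonglongrightarrow> R" and R: "R \<noteq> 0"
    and B: "\<And>n. n \<ge> 1 \<Longrightarrow> B n = \<beta> + (\<Sum>k=1..n. t k * \<rho> k)"
    and E: "\<And>n. n \<ge> 1 \<Longrightarrow> E n = \<kappa> * ((\<Sum>k=1..n. t k * x k) / B n)"
  shows "E \<longlonglongrightarrow> \<kappa> * (L / R)"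
proof -
  have l: "(\<lambda>n. \<kappa> * ((\<Sum>k=1..n. t k * x k) / B n)) \<longlonglongrightarrow> \<kappa> * (L / R)"
    by (intro tendsto_mult tendsto_const GL[OF t T x \<rho> R B]) auto
  have "eventually (\<lambda>n. \<kappa> * ((\<Sum>k=1..n. t k * x k) / B n) = E n) sequentially"
    using eventually_ge_at_top[of 1] by (rule eventually_mono) (simp add: E)
  from iffD1[OF tendsto_cong[OF this] l] show ?thesis .
qed



definition wv :: "real \<Rightarrow> 2 \<Rightarrow> nat \<Rightarrow> real" where
  "wv a r n = (if r = 1 then bcoef a n else 1)"

definition Vc :: "real \<Rightarrow> 2 \<Rightarrow> 2 \<Rightarrow> real" where
  "Vc a r c = 1 / (a + 1)^2 * (if r = 1 \<and> c = 1 then 1 / (1 - 2 * a) else if r = 1 \<or> c = 1 then 1 / (2 - a) else 1 / 3)"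

definition entry :: "real \<Rightarrow> (nat \<Rightarrow> real) \<Rightarrow> 2 \<Rightarrow> 2 \<Rightarrow> nat \<Rightarrow> real" where
  "entry a x r c n = (1 / (real n * sqrt (real n)))^2 * wv a r n * wv a c n * (\<Sum>k=1..n. cr a r k * cr a c k * x k)"

lemma cancel_aux: "(c::real) \<noteq> 0 \<Longrightarrow> c * A * (X / c) = A * X"
  by simp

lemma two_ne: "(2::2) \<noteq> 1" by simp

lemma sn2: "n \<ge> 1 \<Longrightarrow> (1 / (real n * sqrt (real n)))^2 = 1 / real n ^ 3"
  by (simp add: power_mult_distrib power2_eq_square power3_eq_cube)

lemma entry_sym: "entry a x r c n = entry a x c r n"
  unfolding entry_def by (simp add: mult_ac)

context
  fixes a :: real
  assumes a1: "a > -1" and a2: "a < 1/2"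
begin

lemma Apos: "acoef a k > 0" by (rule acoef_pos[OF a1])

lemma A_Suc_pred: "k \<ge> 1 \<Longrightarrow> acoef a (Suc (k - 1)) = acoef a k" by simp

lemma lim11:
  assumes x: "x \<longlonglongrightarrow> L"
  shows "entry a x 1 1 \<longlonglongrightarrow> L * Vc a 1 1"
proof -
  obtain c K where c: "c > 0" "K \<ge> 1" and cK: "\<And>k. k \<ge> K \<Longrightarrow> real k * (acoef a k)^2 \<ge> c"
    using growth[OF a1 a2] by blast
  define t where "t k = (acoef a k)^2" for k
  define B where "B n = real n * (acoef a (Suc n))^2" for n
  define \<rho> where "\<rho> k = real k * (real k / (real k + a))^2 - (real k - 1)" for k :: nat
  have "entry a x 1 1 \<longlonglongrightarrow> 1 / (1 + a)^2 * (L / (1 - 2 * a))"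
  proof (rule CASE[where t=t and \<rho>=\<rho> and B=B and \<beta>=0])
    show "t k \<ge> 0" for k unfolding t_def by simp
    show "filterlim (\<lambda>n. \<Sum>k=1..n. t k) at_top sequentially"
    proof (rule TI[where \<gamma>=c and K=K])
      show "t k \<ge> 0" for k unfolding t_def by simp
      fix k assume k: "k \<ge> K"
      then have "real k > 0" using c by simp
      then show "t k \<ge> c / real k" using cK[OF k] unfolding t_def by (simp add: field_simps mult.commute)
    qed (use c in auto)
    show "x \<longlonglongrightarrow> L" by (rule x)
    show "\<rho> \<longlonglongrightarrow> 1 - 2 * a" unfolding \<rho>_def by (rule rho11)
    show "1 - 2 * a \<noteq> 0" using a2 by simp
    show "B n = 0 + (\<Sum>k=1..n. t k * \<rho> k)" if "n \<ge> 1" for n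
    proof (rule TEL[OF _ _ that])
      fix k :: nat assume k: "k \<ge> 2"
      have kp: "real k + a \<noteq> 0" using k a1 by simp
      have "acoef a (Suc k) = acoef a k * (real k / (real k + a))" by (rule acoef_Suc) (use k in simp)
      moreover have "Suc (k - 1) = k" using k by simp
      moreover have "real (k - 1) = real k - 1" using k by simp
      ultimately show "B k - B (k - 1) = t k * \<rho> k"
        unfolding B_def t_def \<rho>_def by (simp add: power_mult_distrib power_divide algebra_simps)
    next
      show "B 1 = 0 + t 1 * \<rho> 1" unfolding B_def t_def \<rho>_def
        using acoef_2[of a] acoef_1[of a] by (simp add: numeral_2_eq_2 power_divide)
    qed
    show "entry a x 1 1 n = 1 / (1 + a)^2 * ((\<Sum>k=1..n. t k * x k) / B n)" if n: "n \<ge> 1" for n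
    proof -
      have Ap: "acoef a (Suc n) > 0" by (rule Apos)
      have np: "real n > 0" using n by simp
      have "entry a x 1 1 n = 1 / real n ^ 3 * (real n / ((1 + a) * acoef a (Suc n)))^2 * (\<Sum>k=1..n. t k * x k)"
        unfolding entry_def wv_def t_def using sn2[OF n] by (simp add: bcoef_eq[OF a1] cr1 power2_eq_square mult_ac)
      also have "\<dots> = 1 / (1 + a)^2 * ((\<Sum>k=1..n. t k * x k) / B n)"
        unfolding B_def using Ap np a1 by (simp add: field_simps power2_eq_square power3_eq_cube)
      finally show ?thesis .
    qed
  qed
  then show ?thesis unfolding Vc_def by (simp add: add.commute)
qed

lemma Alb:
  assumes c: "c > 0" and cK: "\<And>k. k \<ge> K \<Longrightarrow> real k * (acoef a k)^2 \<ge> c" and k: "k \<ge> K" "k \<ge> 1"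
  shows "acoef a k \<ge> min 1 c / real k"
proof (cases "acoef a k \<ge> 1")
  case True
  have "min 1 c / real k \<le> 1 / real k" using k by (intro divide_right_mono) auto
  also have "\<dots> \<le> 1" using k by simp
  finally show ?thesis using True by linarith
next
  case False
  have kp: "real k > 0" using k by simp
  have "(acoef a k)^2 \<le> acoef a k" using False Apos[of k] by (simp add: power2_eq_square mult_le_cancel_right1)
  moreover have "c / real k \<le> (acoef a k)^2" using cK[OF k(1)] kp by (simp add: field_simps mult.commute)
  moreover have "min 1 c / real k \<le> c / real k" using kp by (intro divide_right_mono) auto
  ultimately show ?thesis by linarith
qed

lemma lim12:
  assumes x: "x \<longlonglongrightarrow> L"
  shows "entry a x 1 2 \<longlonglongrightarrow> L * Vc a 1 2"
proof -
  obtain c K where c: "c > 0" "K \<ge> 1" and cK: "\<And>k. k \<ge> K \<Longrightarrow> real k * (acoef a k)^2 \<ge> c"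
    using growth[OF a1 a2] by blast
  define t where "t k = real (k - 1) * acoef a k" for k
  define B where "B n = (real n)^2 * acoef a (Suc n)" for n
  define \<rho> where "\<rho> k = (real k ^ 3 / (real k + a) - (real k - 1)^2) / (real k - 1)" for k :: nat
  have "entry a x 1 2 \<longlonglongrightarrow> 1 / (1 + a)^2 * (L / (2 - a))"
  proof (rule CASE[where t=t and \<rho>=\<rho> and B=B and \<beta>="1 / (1 + a)"])
    show tnn: "t k \<ge> 0" for k unfolding t_def using Apos[of k] by simp
    show "filterlim (\<lambda>n. \<Sum>k=1..n. t k) at_top sequentially"
    proof (rule TI[where \<gamma>="min 1 c" and K="max K 2"])
      fix k assume k: "k \<ge> max K 2"
      have "min 1 c / real k \<le> acoef a k" using Alb[OF c(1) cK, of k] k by simp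
      also have "\<dots> \<le> t k" unfolding t_def using k Apos[of k] by (intro mult_le_cancel_right1[THEN iffD2]) auto
      finally show "t k \<ge> min 1 c / real k" .
    qed (use c tnn in auto)
    show "x \<longlonglongrightarrow> L" by (rule x)
    show "\<rho> \<longlonglongrightarrow> 2 - a" unfolding \<rho>_def by (rule rho12)
    show "2 - a \<noteq> 0" using a2 by simp
    show "B n = 1 / (1 + a) + (\<Sum>k=1..n. t k * \<rho> k)" if "n \<ge> 1" for n
    proof (rule TEL[OF _ _ that])
      fix k :: nat assume k: "k \<ge> 2"
      have kp: "real k + a \<noteq> 0" using k a1 by simp
      have k1: "real k - 1 \<noteq> 0" using k by simp
      have As: "acoef a (Suc k) = acoef a k * (real k / (real k + a))" by (rule acoef_Suc) (use k in simp)
      have sk: "Suc (k - 1) = k" using k by simp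
      have rk: "real (k - 1) = real k - 1" using k by simp
      have e1: "B k - B (k - 1) = acoef a k * (real k ^ 3 / (real k + a) - (real k - 1)^2)"
        unfolding B_def As sk rk by (simp add: power2_eq_square power3_eq_cube algebra_simps)
      have e2: "t k * \<rho> k = acoef a k * (real k ^ 3 / (real k + a) - (real k - 1)^2)"
        unfolding t_def \<rho>_def rk using cancel_aux[OF k1] by simp
      show "B k - B (k - 1) = t k * \<rho> k" using e1 e2 by simp
    next
      show "B 1 = 1 / (1 + a) + t 1 * \<rho> 1" unfolding B_def t_def
        using acoef_2[of a] by (simp add: numeral_2_eq_2)
    qed
    show "entry a x 1 2 n = 1 / (1 + a)^2 * ((\<Sum>k=1..n. t k * x k) / B n)" if n: "n \<ge> 1" for n
    proof -
      have Ap: "acoef a (Suc n) > 0" by (rule Apos)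
      have np: "real n > 0" using n by simp
      have s: "(\<Sum>k=1..n. cr a 1 k * cr a 2 k * x k) = 1 / (1 + a) * (\<Sum>k=1..n. t k * x k)"
        unfolding sum_distrib_left
        by (intro sum.cong refl) (auto simp: cr1 cr2[OF a1] t_def)
      have "entry a x 1 2 n = 1 / real n ^ 3 * (real n / ((1 + a) * acoef a (Suc n))) * (1 / (1 + a) * (\<Sum>k=1..n. t k * x k))"
        unfolding entry_def wv_def s using sn2[OF n] two_ne by (simp add: bcoef_eq[OF a1])
      also have "\<dots> = 1 / (1 + a)^2 * ((\<Sum>k=1..n. t k * x k) / B n)"
        unfolding B_def using Ap np a1 by (simp add: field_simps power2_eq_square power3_eq_cube)
      finally show ?thesis .
    qed
  qed
  then show ?thesis unfolding Vc_def using two_ne by (simp add: add.commute)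
qed

lemma lim22:
  assumes x: "x \<longlonglongrightarrow> L"
  shows "entry a x 2 2 \<longlonglongrightarrow> L * Vc a 2 2"
proof -
  define t where "t k = (real (k - 1))^2" for k
  define B where "B n = (real n)^3" for n
  define \<rho> where "\<rho> k = (real k ^ 3 - (real k - 1)^3) / (real k - 1)^2" for k :: nat
  have "entry a x 2 2 \<longlonglongrightarrow> 1 / (1 + a)^2 * (L / 3)"
  proof (rule CASE[where t=t and \<rho>=\<rho> and B=B and \<beta>=1])
    show tnn: "t k \<ge> 0" for k unfolding t_def by simp
    show "filterlim (\<lambda>n. \<Sum>k=1..n. t k) at_top sequentially"
    proof (rule TI[where \<gamma>=1 and K=2])
      fix k :: nat assume k: "k \<ge> 2"
      have "1 / real k \<le> 1" using k by simp
      also have "1 \<le> t k" unfolding t_def using k by (simp add: one_le_power)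
      finally show "t k \<ge> 1 / real k" .
    qed (use tnn in auto)
    show "x \<longlonglongrightarrow> L" by (rule x)
    show "\<rho> \<longlonglongrightarrow> 3" unfolding \<rho>_def by (rule rho22)
    show "(3::real) \<noteq> 0" by simp
    show "B n = 1 + (\<Sum>k=1..n. t k * \<rho> k)" if "n \<ge> 1" for n
    proof (rule TEL[OF _ _ that])
      fix k :: nat assume k: "k \<ge> 2"
      have k1: "real k - 1 \<noteq> 0" using k by simp
      have "real (k - 1) = real k - 1" using k by simp
      then show "B k - B (k - 1) = t k * \<rho> k"
        unfolding B_def t_def \<rho>_def using k1 by (simp add: power2_eq_square)
    next
      show "B 1 = 1 + t 1 * \<rho> 1" unfolding B_def t_def by simp
    qed
    show "entry a x 2 2 n = 1 / (1 + a)^2 * ((\<Sum>k=1..n. t k * x k) / B n)" if n: "n \<ge> 1" for n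
    proof -
      have s: "(\<Sum>k=1..n. cr a 2 k * cr a 2 k * x k) = 1 / (1 + a)^2 * (\<Sum>k=1..n. t k * x k)"
        unfolding sum_distrib_left
        by (intro sum.cong refl) (auto simp: cr2[OF a1] t_def power2_eq_square)
      show ?thesis
        unfolding entry_def wv_def s B_def using sn2[OF n] two_ne by simp
    qed
  qed
  then show ?thesis unfolding Vc_def using two_ne by (simp add: add.commute)
qed

end


lemma lim_pos:
  assumes a1: "a > -1" and a2: "a < 1/2" and x: "x \<longlonglongrightarrow> L"
  shows "entry a x r c \<longlonglongrightarrow> L * Vc a r c"
proof -
  have V: "Vc a 2 1 = Vc a 1 2" unfolding Vc_def by simp
  consider "r = 1" "c = 1" | "r = 1" "c = 2" | "r = 2" "c = 1" | "r = 2" "c = 2"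
    using exhaust_2[of r] exhaust_2[of c] by blast
  then show ?thesis
  proof cases
    case 1 then show ?thesis using lim11[OF a1 a2 x] by simp
  next
    case 2 then show ?thesis using lim12[OF a1 a2 x] by simp
  next
    case 3
    have "entry a x 2 1 = entry a x 1 2" by (rule ext) (rule entry_sym)
    then show ?thesis using lim12[OF a1 a2 x] V 3 by simp
  next
    case 4 then show ?thesis using lim22[OF a1 a2 x] by simp
  qed
qed

lemma acoef_m1: "k \<ge> 2 \<Longrightarrow> acoef (-1) k = 0"
  unfolding acoef_def by (rule prod_zero) (auto intro!: bexI[of _ 1])

lemma cr_m1: "k \<ge> 2 \<Longrightarrow> cr (-1) r k = 0"
  unfolding cr_def by (simp add: acoef_m1)

lemma bcoef_m1: "n \<ge> 1 \<Longrightarrow> bcoef (-1) n = 1"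
proof (induction n rule: dec_induct)
  case base then show ?case by (simp add: bcoef_def acoef_def)
next
  case (step n) then show ?case by (simp add: bcoef_def acoef_m1)
qed

lemma sum_m1: "n \<ge> 1 \<Longrightarrow> (\<Sum>k=1..n. cr (-1) r k * cr (-1) c k * x k) = cr (-1) r 1 * cr (-1) c 1 * x 1"
proof (induction n rule: dec_induct)
  case base then show ?case by simp
next
  case (step n) then show ?case by (simp add: cr_m1)
qed

lemma inv_cube: "(\<lambda>n::nat. 1 / real n ^ 3) \<longlonglongrightarrow> 0"
  by real_asymp

lemma lim_m1: "entry (-1) x r c \<longlonglongrightarrow> L * Vc (-1) r c"
proof -
  have l: "(\<lambda>n. 1 / real n ^ 3 * (cr (-1) r 1 * cr (-1) c 1 * x 1)) \<longlonglongrightarrow> 0 * (cr (-1) r 1 * cr (-1) c 1 * x 1)"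
    by (intro tendsto_mult inv_cube tendsto_const)
  have "eventually (\<lambda>n. 1 / real n ^ 3 * (cr (-1) r 1 * cr (-1) c 1 * x 1) = entry (-1) x r c n) sequentially"
  proof (rule eventually_mono[OF eventually_ge_at_top[of 1]])
    fix n :: nat assume n: "n \<ge> 1"
    show "1 / real n ^ 3 * (cr (-1) r 1 * cr (-1) c 1 * x 1) = entry (-1) x r c n"
      unfolding entry_def wv_def sum_m1[OF n] bcoef_m1[OF n] using sn2[OF n] by simp
  qed
  from iffD1[OF tendsto_cong[OF this] l] show ?thesis unfolding Vc_def by simp
qed

lemma lim_all:
  assumes a1: "a \<ge> -1" and a2: "a < 1/2" and x: "x \<longlonglongrightarrow> L"
  shows "entry a x r c \<longlonglongrightarrow> L * Vc a r c"
proof (cases "a = -1")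
  case True then show ?thesis using lim_m1 by simp
next
  case False then show ?thesis using lim_pos[OF _ a2 x] a1 by simp
qed



lemma diag_triple:
  fixes D Q :: "real^'n^'n"
  assumes D: "\<And>i l. D $ i $ l = (if i = l then f i else 0)"
  shows "(D ** Q ** transpose D) $ i $ l = f i * Q $ i $ l * f l"
proof -
  have 1: "(D ** Q) $ i $ m = f i * Q $ i $ m" for m
    unfolding matrix_matrix_mult_def by (simp add: D if_distrib[of "\<lambda>x. x * _"] sum.delta cong: if_cong)
  show ?thesis
    unfolding matrix_matrix_mult_def[of "D ** Q"] transpose_def
    by (simp add: 1 D if_distrib[of "\<lambda>x. _ * x"] sum.delta' cong: if_cong)
qed

lemma vec22: "(vector [vector [x11, x12], vector [x21, x22]] :: real^2^2) $ r $ c =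
   (if r = 1 then (if c = 1 then x11 else x12) else (if c = 1 then x21 else x22))"
  using exhaust_2[of r] exhaust_2[of c] by auto

lemma Vn_entry: "(erw_Vn a n :: real^(2 \<times> 'd::finite)^(2 \<times> 'd)) $ i $ l =
  (if i = l then 1 / (real n * sqrt (real n)) * wv a (fst i) n else 0)"
proof -
  obtain r j c j' where i: "i = (r, j)" and l: "l = (c, j')" by (cases i, cases l) auto
  show ?thesis unfolding erw_Vn_def kron_def i l
    using exhaust_2[of r] exhaust_2[of c] by (auto simp: vec22 mat_def wv_def)
qed

lemma V_entry: "(erw_V a :: real^(2 \<times> 'd::finite)^(2 \<times> 'd)) $ (r, j) $ (c, j') =
  (if j = j' then 1 / real CARD('d) else 0) * Vc a r c"
  unfolding erw_V_def kron_def Vc_def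
  using exhaust_2[of r] exhaust_2[of c] by (auto simp: vec22 mat_def)

lemma pq_entry: "pred_qv M F Z n \<omega> $ i $ l =
   (\<Sum>k\<in>{1..n}. real_cond_exp M (F (k - 1)) (\<lambda>\<omega>'. (Z k \<omega>' - Z (k - 1) \<omega>') $ i * (Z k \<omega>' - Z (k - 1) \<omega>') $ l) \<omega>)"
  unfolding pred_qv_def by simp

context erw_loc
begin

lemma a_ge: "a \<ge> -1"
proof -
  have d: "2 * real CARD('d) - 1 \<ge> 1" using card_pos_real[where 'a='d] by linarith
  have "qq p CARD('d) \<le> (2 * real CARD('d) - 1) / (2 * real CARD('d) - 1)"
    unfolding qq_def by (intro divide_right_mono; use d p0 in linarith)
  then have "qq p CARD('d) \<le> 1" using d by simp
  then show ?thesis using a_def erw_a_eq[where 'd='d, of p] p0 by simp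
qed

lemma part2:
  assumes ah: "a < 1/2"
  shows "AE \<omega> in M. (\<lambda>n. erw_Vn a n ** pred_qv M F (erw_Mcal a X) n \<omega> ** transpose (erw_Vn a n))
                        \<longlonglongrightarrow> (erw_V a :: real ^ (2 \<times> 'd) ^ (2 \<times> 'd))"
proof (rule AE_mp[OF AE_conjI[OF QV_CE Cf_lim[OF ah]] AE_I2[OF impI]])
  fix \<omega>
  assume h: "(\<forall>n r c. real_cond_exp M (F n)
      (\<lambda>\<omega>'. (erw_Mcal a X (Suc n) \<omega>' - erw_Mcal a X n \<omega>') $ r * (erw_Mcal a X (Suc n) \<omega>' - erw_Mcal a X n \<omega>') $ c) \<omega>
    = cr a (fst r) (Suc n) * cr a (fst c) (Suc n) * Cf p a n (Vp X n \<omega>) (snd r) (snd c)) \<and>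
    (\<forall>j j'. (\<lambda>n. Cf p a n (Vp X n \<omega>) j j') \<longlonglongrightarrow> (if j = j' then 1 / real CARD('d) else 0))"
  show "(\<lambda>n. erw_Vn a n ** pred_qv M F (erw_Mcal a X) n \<omega> ** transpose (erw_Vn a n)) \<longlonglongrightarrow> erw_V a"
  proof (intro vec_tendstoI)
    fix i l :: "2 \<times> 'd"
    obtain r j c j' where i: "i = (r, j)" and l: "l = (c, j')" by (cases i, cases l) auto
    define xx where "xx k = Cf p a (k - 1) (Vp X (k - 1) \<omega>) j j'" for k
    have xl: "xx \<longlonglongrightarrow> (if j = j' then 1 / real CARD('d) else 0)"
      by (rule LIMSEQ_imp_Suc) (use h in \<open>simp add: xx_def\<close>)
    have Q: "pred_qv M F (erw_Mcal a X) n \<omega> $ i $ l = (\<Sum>k=1..n. cr a r k * cr a c k * xx k)" for n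
      unfolding pq_entry
    proof (intro sum.cong refl)
      fix k assume k: "k \<in> {1..n}"
      then have sk: "Suc (k - 1) = k" by simp
      show "real_cond_exp M (F (k - 1)) (\<lambda>\<omega>'. (erw_Mcal a X k \<omega>' - erw_Mcal a X (k - 1) \<omega>') $ i * (erw_Mcal a X k \<omega>' - erw_Mcal a X (k - 1) \<omega>') $ l) \<omega>
          = cr a r k * cr a c k * xx k"
        using h[THEN conjunct1, rule_format, of "k - 1" i l] unfolding sk xx_def i l by simp
    qed
    have E: "(erw_Vn a n ** pred_qv M F (erw_Mcal a X) n \<omega> ** transpose (erw_Vn a n)) $ i $ l = entry a xx r c n" for n
      unfolding diag_triple[OF Vn_entry] Q unfolding entry_def i l by (simp add: power2_eq_square mult_ac)
    show "(\<lambda>n. (erw_Vn a n ** pred_qv M F (erw_Mcal a X) n \<omega> ** transpose (erw_Vn a n)) $ i $ l) \<longlonglongrightarrow> erw_V a $ i $ l"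
      unfolding E unfolding i l V_entry by (rule lim_all[OF a_ge ah xl])
  qed
qed

end

theorem lemma3p1:
  fixes M :: "'a measure" and X :: "nat \<Rightarrow> 'a \<Rightarrow> 'd::finite \<times> bool" and p a :: real
  assumes "0 \<le> p" and "p \<le> 1"
    and "is_erw M p X"
    and "a = erw_a CARD('d) p"
  shows "sq_int_martingale M (erw_filtr M X) (erw_Mcal a X)
    \<and> (a < 1 / 2 \<longrightarrow>
         (AE \<omega> in M. (\<lambda>n. erw_Vn a n ** pred_qv M (erw_filtr M X) (erw_Mcal a X) n \<omega>
                              ** transpose (erw_Vn a n))
                        \<longlonglongrightarrow> (erw_V a :: real ^ (2 \<times> 'd) ^ (2 \<times> 'd))))"
proof -
  interpret E: erw_loc M X p a using assms by (unfold_locales) auto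
  show ?thesis using E.part1 E.part2 by blast
qed


end
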